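(* Let $p\ne2$ be a real number and let $F\subset\mathrm{Sym}^2(\mathbb{R}^n)$ be a cone subequation. Let $g:S^{n-1}\to[-\infty,\infty)$ and $u:\mathbb{R}^n\setminus\{0\}\to[-\infty,\infty)$ be upper semicontinuous functions related by $u(x)=\frac{1}{|x|^{p-2}}g\big(\frac{x}{|x|}\big)$. Then: $u$ is $F$-subharmonic on $\mathbb{R}^n\setminus\{0\}$ if and only if $g$ is $F_{S^{n-1}}$-subharmonic on $S^{n-1}$; and $u$ is $F$-harmonic on $\mathbb{R}^n\setminus\{0\}$ if and only if $g$ is $F_{S^{n-1}}$-subharmonic on $S^{n-1}$ and $-g$ is $(\widetilde F)_{S^{n-1}}$-subharmonic on $S^{n-1}$.
   Context: A cone subequation is a closed subset $F\subset\mathrm{Sym}^2(\mathbb{R}^n)$, $\emptyset\ne F\ne\mathrm{Sym}^2(\mathbb{R}^n)$, with $F+\{A\ge0\}\subset F$ and $tF\subset F$ for $t\ge0$. Its dual is $\widetilde F=\mathrm{Sym}^2(\mathbb{R}^n)\setminus(-\mathrm{Int}\,F)$. An upper semicontinuous $u$ on an open set is $F$-subharmonic if for each point $x$ and each $C^2$ function $\varphi$ near $x$ with $u\le\varphi$ near $x$, $u(x)=\varphi(x)$, one has $D^2\varphi(x)\in F$; $u$ is $F$-harmonic if $u$ is $F$-subharmonic and $-u$ is $\widetilde F$-subharmonic. Let $J^2(S^{n-1})$ be the Riemannian $2$-jet bundle with fibre $\mathbb{R}\times T^*_\sigma S^{n-1}\times\mathrm{Sym}^2(T^*_\sigma S^{n-1})$,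 and $J^2_\sigma\psi=(\psi(\sigma),D_\sigma\psi,\mathrm{Hess}_\sigma\psi)$. Define the bundle map $\Phi:J^2(S^{n-1})\to\mathrm{Sym}^2(\mathbb{R}^n)$ by $\Phi(r,q,H)=H-(p-2)rP_{\sigma^\perp}-(p-1)(\sigma q^t+q\sigma^t)+(p-2)(p-1)rP_\sigma$ at $\sigma$, where $q\in T_\sigma S^{n-1}\subset\mathbb{R}^n$ and $H$ is extended by zero on $\mathbb{R}\sigma$. For a subset $F$ set $F_{S^{n-1}}=\Phi^{-1}(F)\subset J^2(S^{n-1})$. An upper semicontinuous $g$ on $S^{n-1}$ is $F_{S^{n-1}}$-subharmonic if for each $\sigma$ and each $C^2$ function $\psi$ near $\sigma$ with $g\le\psi$ near $\sigma$, $g(\sigma)=\psi(\sigma)$, one has $J^2_\sigma\psi\in F_{S^{n-1}}$. *)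

theory Defs
  imports "HOL-Analysis.Analysis" "HOL-Library.Extended_Real"
begin

definition Sym2 :: "(real^'n^'n) set" where
  "Sym2 = {A. transpose A = A}"

definition psd :: "real^'n^'n \<Rightarrow> bool" where
  "psd A \<longleftrightarrow> A \<in> Sym2 \<and> (\<forall>x. 0 \<le> x \<bullet> (A *v x))"

definition sym_interior :: "(real^'n^'n) set \<Rightarrow> (real^'n^'n) set" where
  "sym_interior F = {A \<in> Sym2. \<exists>e>0. \<forall>B\<in>Sym2. dist B A < e \<longrightarrow> B \<in> F}"

definition cone_subequation :: "(real^'n^'n) set \<Rightarrow> bool" where
  "cone_subequation F \<longleftrightarrow> F \<subseteq> Sym2 \<and> closed F \<and> F \<noteq> {} \<and> F \<noteq> Sym2 \<and>
     (\<forall>A\<in>F. \<forall>P. psd P \<longrightarrow> A + P \<in> F) \<and>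
     (\<forall>A\<in>F. \<forall>t::real. t \<ge> 0 \<longrightarrow> t *\<^sub>R A \<in> F)"

definition dual_subeq :: "(real^'n^'n) set \<Rightarrow> (real^'n^'n) set" where
  "dual_subeq F = Sym2 - uminus ` (sym_interior F)"

definition usc_on :: "('a::metric_space) set \<Rightarrow> ('a \<Rightarrow> ereal) \<Rightarrow> bool" where
  "usc_on S u \<longleftrightarrow> (\<forall>x\<in>S. u x \<noteq> \<infinity>) \<and>
     (\<forall>x\<in>S. \<forall>c. u x < c \<longrightarrow> (\<exists>e>0. \<forall>y\<in>S. dist y x < e \<longrightarrow> u y < c))"

definition C2_near ::
  "(real^'n \<Rightarrow> real) \<Rightarrow> (real^'n \<Rightarrow> real^'n) \<Rightarrow> (real^'n \<Rightarrow> real^'n^'n) \<Rightarrow> real^'n \<Rightarrow> bool" where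
  "C2_near phi Dphi Hphi x \<longleftrightarrow> (\<exists>e>0.
     (\<forall>y\<in>ball x e. (phi has_derivative (\<lambda>h. Dphi y \<bullet> h)) (at y) \<and>
                    (Dphi has_derivative (\<lambda>h. Hphi y *v h)) (at y)) \<and>
     continuous_on (ball x e) Hphi)"

definition F_subharmonic :: "(real^'n^'n) set \<Rightarrow> (real^'n) set \<Rightarrow> (real^'n \<Rightarrow> ereal) \<Rightarrow> bool" where
  "F_subharmonic F \<Omega> u \<longleftrightarrow> usc_on \<Omega> u \<and>
     (\<forall>x\<in>\<Omega>. \<forall>phi Dphi Hphi. C2_near phi Dphi Hphi x \<longrightarrow>
        (\<exists>e>0. \<forall>y\<in>\<Omega>. dist y x < e \<longrightarrow> u y \<le> ereal (phi y)) \<longrightarrow>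
        u x = ereal (phi x) \<longrightarrow> Hphi x \<in> F)"

definition F_harmonic :: "(real^'n^'n) set \<Rightarrow> (real^'n) set \<Rightarrow> (real^'n \<Rightarrow> ereal) \<Rightarrow> bool" where
  "F_harmonic F \<Omega> u \<longleftrightarrow> F_subharmonic F \<Omega> u \<and> F_subharmonic (dual_subeq F) \<Omega> (\<lambda>x. - u x)"

definition outer :: "real^'n \<Rightarrow> real^'n \<Rightarrow> real^'n^'n" where
  "outer a b = (\<chi> i j. a $ i * b $ j)"

definition proj_along :: "real^'n \<Rightarrow> real^'n^'n" where
  "proj_along \<sigma> = outer \<sigma> \<sigma>"

definition proj_perp :: "real^'n \<Rightarrow> real^'n^'n" where
  "proj_perp \<sigma> = mat 1 - outer \<sigma> \<sigma>"

text \<open>Fibre of J^2(S^{n-1}) at sigma: (r, q, H), q tangent, H a symmetric form on the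
  tangent space, extended by zero on R sigma (so represented as a symmetric matrix killing sigma).\<close>
definition J2_sphere :: "((real^'n) \<times> real \<times> (real^'n) \<times> (real^'n^'n)) set" where
  "J2_sphere = {(\<sigma>, r, q, H). \<sigma> \<in> sphere 0 1 \<and> q \<bullet> \<sigma> = 0 \<and> H \<in> Sym2 \<and> H *v \<sigma> = 0}"

definition Phi :: "real \<Rightarrow> (real^'n) \<times> real \<times> (real^'n) \<times> (real^'n^'n) \<Rightarrow> real^'n^'n" where
  "Phi p = (\<lambda>(\<sigma>, r, q, H). H - ((p - 2) * r) *\<^sub>R proj_perp \<sigma>
      - (p - 1) *\<^sub>R (outer \<sigma> q + outer q \<sigma>) + ((p - 2) * (p - 1) * r) *\<^sub>R proj_along \<sigma>)"

definition F_sphere :: "real \<Rightarrow> (real^'n^'n) set \<Rightarrow> ((real^'n) \<times> real \<times> (real^'n) \<times> (real^'n^'n)) set" where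
  "F_sphere p F = {J \<in> J2_sphere. Phi p J \<in> F}"

text \<open>Riemannian 2-jet at sigma of the restriction to S^{n-1} of an ambient C^2 function phi
  (gradient Dphi, Hessian Hphi): value, tangential gradient, and the Riemannian Hessian of the
  unit sphere, P D^2phi P - (sigma . grad phi) P, P = P_{sigma perp}.\<close>
definition jet2_sphere ::
  "(real^'n \<Rightarrow> real) \<Rightarrow> (real^'n \<Rightarrow> real^'n) \<Rightarrow> (real^'n \<Rightarrow> real^'n^'n) \<Rightarrow> real^'n
     \<Rightarrow> (real^'n) \<times> real \<times> (real^'n) \<times> (real^'n^'n)" where
  "jet2_sphere phi Dphi Hphi \<sigma> =
     (\<sigma>, phi \<sigma>, proj_perp \<sigma> *v Dphi \<sigma>,
      proj_perp \<sigma> ** Hphi \<sigma> ** proj_perp \<sigma> - (\<sigma> \<bullet> Dphi \<sigma>) *\<^sub>R proj_perp \<sigma>)"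

text \<open>Subharmonicity on S^{n-1} for a subset G of J^2(S^{n-1}). C^2 test functions near sigma
  on the sphere are (locally) exactly restrictions of ambient C^2 functions near sigma.\<close>
definition sphere_subharmonic ::
  "((real^'n) \<times> real \<times> (real^'n) \<times> (real^'n^'n)) set \<Rightarrow> (real^'n \<Rightarrow> ereal) \<Rightarrow> bool" where
  "sphere_subharmonic G g \<longleftrightarrow> usc_on (sphere 0 1) g \<and>
     (\<forall>\<sigma>\<in>sphere 0 1. \<forall>phi Dphi Hphi. C2_near phi Dphi Hphi \<sigma> \<longrightarrow>
        (\<exists>e>0. \<forall>\<tau>\<in>sphere 0 1. dist \<tau> \<sigma> < e \<longrightarrow> g \<tau> \<le> ereal (phi \<tau>)) \<longrightarrow>
        g \<sigma> = ereal (phi \<sigma>) \<longrightarrow> jet2_sphere phi Dphi Hphi \<sigma> \<in> G)"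

end

theory Submission
  imports Defs
begin

lemma outer_mv[simp]: "outer a b *v h = (b \<bullet> h) *\<^sub>R a"
  by (simp add: outer_def matrix_vector_mult_def vec_eq_iff inner_vec_def sum_distrib_left mult_ac)

lemma proj_perp_mv[simp]: "proj_perp s *v h = h - (s \<bullet> h) *\<^sub>R s"
  by (simp add: proj_perp_def matrix_vector_mult_diff_rdistrib)

lemma proj_along_mv[simp]: "proj_along s *v h = (s \<bullet> h) *\<^sub>R s"
  by (simp add: proj_along_def)

lemma mv_scaleR[simp]: "(c *\<^sub>R A) *v h = c *\<^sub>R (A *v (h::real^'n))"
  by (simp add: matrix_vector_mult_def vec_eq_iff sum_distrib_left mult_ac)

lemma mv_add[simp]: "(A + B) *v h = A *v h + B *v (h::real^'n)"
  by (simp add: matrix_vector_mult_add_rdistrib)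

lemma mv_diff[simp]: "(A - B) *v h = A *v h - B *v (h::real^'n)"
  by (simp add: matrix_vector_mult_diff_rdistrib)

lemma mv_mm[simp]: "(A ** B) *v h = A *v (B *v (h::real^'n))"
  by (simp add: matrix_vector_mul_assoc)

lemma Sym2_iff: "A \<in> Sym2 \<longleftrightarrow> (\<forall>x y. x \<bullet> (A *v y) = y \<bullet> (A *v (x::real^'n)))"
proof
  assume "A \<in> Sym2"
  then have "transpose A = A" by (simp add: Sym2_def)
  then show "\<forall>x y. x \<bullet> (A *v y) = y \<bullet> (A *v x)"
    by (metis dot_lmul_matrix inner_commute transpose_matrix_vector)
next
  assume H: "\<forall>x y. x \<bullet> (A *v y) = y \<bullet> (A *v (x::real^'n))"
  have "transpose A *v y = A *v y" for y
  proof -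
    have "x \<bullet> (transpose A *v y) = x \<bullet> (A *v y)" for x
      using H by (metis dot_lmul_matrix inner_commute transpose_matrix_vector)
    then show ?thesis by (metis inner_commute vector_eq_rdot)
  qed
  then show "A \<in> Sym2" by (simp add: Sym2_def matrix_eq)
qed

definition C2L :: "(real^'n) set \<Rightarrow> (real^'n \<Rightarrow> real) \<Rightarrow> (real^'n \<Rightarrow> real^'n)
   \<Rightarrow> (real^'n \<Rightarrow> real^'n \<Rightarrow> real^'n) \<Rightarrow> bool" where
  "C2L S f Df L \<longleftrightarrow> (\<forall>y\<in>S. (f has_derivative (\<lambda>h. Df y \<bullet> h)) (at y) \<and> (Df has_derivative L y) (at y))
     \<and> continuous_on S (\<lambda>y. matrix (L y))"

lemma C2L_lin: "C2L S f Df L \<Longrightarrow> y \<in> S \<Longrightarrow> linear (L y)"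
  unfolding C2L_def by (meson has_derivative_linear)

lemma C2L_mv: "C2L S f Df L \<Longrightarrow> y \<in> S \<Longrightarrow> matrix (L y) *v h = L y h"
  using C2L_lin matrix_vector_mul(2) by metis

lemma C2L_contf: "C2L S f Df L \<Longrightarrow> continuous_on S f"
  unfolding C2L_def
  by (meson continuous_at_imp_continuous_on has_derivative_continuous)

lemma C2L_contD: "C2L S f Df L \<Longrightarrow> continuous_on S Df"
  unfolding C2L_def
  by (meson continuous_at_imp_continuous_on has_derivative_continuous)

lemma continuous_on_vec_nth_comp[continuous_intros]:
  fixes x :: "'a::topological_space \<Rightarrow> 'b::real_normed_vector^'k"
  shows "continuous_on S x \<Longrightarrow> continuous_on S (\<lambda>y. x y $ i)"
  by (rule bounded_linear.continuous_on[OF bounded_linear_vec_nth])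

lemma continuous_on_mv:
  fixes A :: "_ \<Rightarrow> real^'n^'m"
  assumes "continuous_on S A" "continuous_on S v"
  shows "continuous_on S (\<lambda>y. A y *v v y)"
  unfolding matrix_vector_mult_def
  by (intro continuous_on_vec_lambda continuous_on_sum continuous_on_mult continuous_on_vec_nth_comp assms)

lemma C2L_contL: "C2L S f Df L \<Longrightarrow> continuous_on S v \<Longrightarrow> continuous_on S (\<lambda>y. L y (v y))"
proof -
  assume a: "C2L S f Df L" "continuous_on S v"
  have "continuous_on S (\<lambda>y. matrix (L y) *v v y)"
    using a by (intro continuous_on_mv) (auto simp: C2L_def)
  then show ?thesis using C2L_mv[OF a(1)] by (simp cong: continuous_on_cong)
qed

lemma matrix_contI:
  assumes "\<And>h. continuous_on S (\<lambda>y. L y h :: real^'n)"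
  shows "continuous_on S (\<lambda>y. matrix (L y) :: real^'m^'n)"
  unfolding matrix_def
  by (intro continuous_on_vec_lambda continuous_on_compose2[OF bounded_linear.continuous_on[OF bounded_linear_vec_nth] assms]) auto

lemma C2LI:
  assumes "\<And>y. y \<in> S \<Longrightarrow> (f has_derivative (\<lambda>h. Df y \<bullet> h)) (at y)"
    "\<And>y. y \<in> S \<Longrightarrow> (Df has_derivative L y) (at y)"
    "\<And>h. continuous_on S (\<lambda>y. L y h)"
  shows "C2L S f Df L"
  using assms matrix_contI unfolding C2L_def by blast

lemma C2L_subset: "C2L S f Df L \<Longrightarrow> T \<subseteq> S \<Longrightarrow> C2L T f Df L"
  unfolding C2L_def by (meson continuous_on_subset subsetD)

lemma C2_near_C2L: "C2_near f Df H x \<Longrightarrow> \<exists>e>0. C2L (ball x e) f Df (\<lambda>y h. H y *v h)"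
  by (auto simp: C2_near_def C2L_def)

lemma C2L_C2_near: "C2L S f Df L \<Longrightarrow> open S \<Longrightarrow> x \<in> S \<Longrightarrow> C2_near f Df (\<lambda>y. matrix (L y)) x"
proof -
  assume a: "C2L S f Df L" "open S" "x \<in> S"
  then obtain e where e: "e > 0" "ball x e \<subseteq> S" by (meson openE)
  show ?thesis unfolding C2_near_def
  proof (intro exI[of _ e] conjI ballI)
    fix y assume "y \<in> ball x e"
    then have y: "y \<in> S" using e by auto
    show "(f has_derivative (\<lambda>h. Df y \<bullet> h)) (at y)" using a(1) y unfolding C2L_def by blast
    have "(Df has_derivative L y) (at y)" using a(1) y unfolding C2L_def by blast
    moreover have "L y = (\<lambda>h. matrix (L y) *v h)" using C2L_mv[OF a(1) y] by auto
    ultimately show "(Df has_derivative (\<lambda>h. matrix (L y) *v h)) (at y)" by simp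
  next
    show "continuous_on (ball x e) (\<lambda>y. matrix (L y))"
      using a(1) e(2) unfolding C2L_def by (meson continuous_on_subset)
  qed (use e in auto)
qed

lemma C2L_hd1: "C2L S f Df L \<Longrightarrow> y \<in> S \<Longrightarrow> (f has_derivative (\<lambda>h. Df y \<bullet> h)) (at y)"
  unfolding C2L_def by blast
lemma C2L_hd2: "C2L S f Df L \<Longrightarrow> y \<in> S \<Longrightarrow> (Df has_derivative L y) (at y)"
  unfolding C2L_def by blast

lemma C2L_contL2:
  assumes "C2L T f Df L" "continuous_on S G" "G ` S \<subseteq> T" "continuous_on S w"
  shows "continuous_on S (\<lambda>y. L (G y) (w y))"
proof -
  have "continuous_on T (\<lambda>y. matrix (L y))" using assms(1) unfolding C2L_def by blast
  then have "continuous_on S (\<lambda>y. matrix (L (G y)))"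
    using assms(2,3) by (rule continuous_on_compose2)
  then have "continuous_on S (\<lambda>y. matrix (L (G y)) *v w y)"
    using assms(4) by (rule continuous_on_mv)
  moreover have "\<And>y. y \<in> S \<Longrightarrow> matrix (L (G y)) *v w y = L (G y) (w y)"
    using C2L_mv[OF assms(1)] assms(3) by blast
  ultimately show ?thesis by (simp cong: continuous_on_cong)
qed

lemma C2L_mult:
  assumes f: "C2L S f Df Lf" and g: "C2L S g Dg Lg"
  shows "C2L S (\<lambda>y. f y * g y) (\<lambda>y. f y *\<^sub>R Dg y + g y *\<^sub>R Df y)
     (\<lambda>y h. (Df y \<bullet> h) *\<^sub>R Dg y + f y *\<^sub>R Lg y h + (Dg y \<bullet> h) *\<^sub>R Df y + g y *\<^sub>R Lf y h)"
proof (rule C2LI)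
  fix y assume y: "y \<in> S"
  show "((\<lambda>y. f y * g y) has_derivative (\<lambda>h. (f y *\<^sub>R Dg y + g y *\<^sub>R Df y) \<bullet> h)) (at y)"
    by (rule has_derivative_eq_rhs[OF has_derivative_mult[OF C2L_hd1[OF f y] C2L_hd1[OF g y]]])
      (auto simp: inner_add_left algebra_simps)
  show "((\<lambda>y. f y *\<^sub>R Dg y + g y *\<^sub>R Df y) has_derivative
     (\<lambda>h. (Df y \<bullet> h) *\<^sub>R Dg y + f y *\<^sub>R Lg y h + (Dg y \<bullet> h) *\<^sub>R Df y + g y *\<^sub>R Lf y h)) (at y)"
    by (rule has_derivative_eq_rhs[OF has_derivative_add[OF
         has_derivative_scaleR[OF C2L_hd1[OF f y] C2L_hd2[OF g y]]
         has_derivative_scaleR[OF C2L_hd1[OF g y] C2L_hd2[OF f y]]]])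
      (auto simp: algebra_simps)
next
  fix h
  show "continuous_on S (\<lambda>y. (Df y \<bullet> h) *\<^sub>R Dg y + f y *\<^sub>R Lg y h + (Dg y \<bullet> h) *\<^sub>R Df y + g y *\<^sub>R Lf y h)"
    using C2L_contf[OF f] C2L_contf[OF g] C2L_contD[OF f] C2L_contD[OF g]
      C2L_contL[OF f continuous_on_const] C2L_contL[OF g continuous_on_const]
    by (intro continuous_intros) auto
qed

lemma C2L_comp_real:
  assumes f: "C2L S f Df Lf" and fT: "\<And>y. y \<in> S \<Longrightarrow> f y \<in> T"
    and d1: "\<And>x. x \<in> T \<Longrightarrow> (\<phi> has_real_derivative \<phi>1 x) (at x)"
    and d2: "\<And>x. x \<in> T \<Longrightarrow> (\<phi>1 has_real_derivative \<phi>2 x) (at x)"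
    and c2: "continuous_on T \<phi>2"
  shows "C2L S (\<lambda>y. \<phi> (f y)) (\<lambda>y. \<phi>1 (f y) *\<^sub>R Df y)
     (\<lambda>y h. (\<phi>2 (f y) * (Df y \<bullet> h)) *\<^sub>R Df y + \<phi>1 (f y) *\<^sub>R Lf y h)"
proof (rule C2LI)
  have c1: "continuous_on T \<phi>1"
    using d2 by (meson DERIV_isCont continuous_at_imp_continuous_on)
  have cf: "continuous_on S f" by (rule C2L_contf[OF f])
  have img: "f ` S \<subseteq> T" using fT by auto
  fix y assume y: "y \<in> S"
  have a1: "(\<phi> has_derivative (*) (\<phi>1 (f y))) (at (f y))"
    using d1[OF fT[OF y]] by (simp add: has_field_derivative_def)
  show "((\<lambda>y. \<phi> (f y)) has_derivative (\<lambda>h. (\<phi>1 (f y) *\<^sub>R Df y) \<bullet> h)) (at y)"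
    by (rule has_derivative_eq_rhs[OF has_derivative_compose[OF C2L_hd1[OF f y] a1]]) auto
  have a2: "(\<phi>1 has_derivative (*) (\<phi>2 (f y))) (at (f y))"
    using d2[OF fT[OF y]] by (simp add: has_field_derivative_def)
  show "((\<lambda>y. \<phi>1 (f y) *\<^sub>R Df y) has_derivative
        (\<lambda>h. (\<phi>2 (f y) * (Df y \<bullet> h)) *\<^sub>R Df y + \<phi>1 (f y) *\<^sub>R Lf y h)) (at y)"
    by (rule has_derivative_eq_rhs[OF has_derivative_scaleR[OF
          has_derivative_compose[OF C2L_hd1[OF f y] a2] C2L_hd2[OF f y]]]) (auto simp: algebra_simps)
next
  fix h
  have c1: "continuous_on T \<phi>1"
    using d2 by (meson DERIV_isCont continuous_at_imp_continuous_on)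
  have cf: "continuous_on S f" by (rule C2L_contf[OF f])
  have img: "f ` S \<subseteq> T" using fT by auto
  have "continuous_on S (\<lambda>y. \<phi>1 (f y))" by (rule continuous_on_compose2[OF c1 cf img])
  moreover have "continuous_on S (\<lambda>y. \<phi>2 (f y))" by (rule continuous_on_compose2[OF c2 cf img])
  ultimately show "continuous_on S (\<lambda>y. (\<phi>2 (f y) * (Df y \<bullet> h)) *\<^sub>R Df y + \<phi>1 (f y) *\<^sub>R Lf y h)"
    using C2L_contD[OF f] C2L_contL[OF f continuous_on_const]
    by (intro continuous_intros) auto
qed

lemma C2L_inner_self: "C2L S (\<lambda>y. y \<bullet> y) (\<lambda>y. 2 *\<^sub>R y) (\<lambda>y h. 2 *\<^sub>R h)"
proof (rule C2LI)
  fix y :: "real^'n"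
  show "((\<lambda>y. y \<bullet> y) has_derivative (\<lambda>h. (2 *\<^sub>R y) \<bullet> h)) (at y)"
    by (rule has_derivative_eq_rhs[OF has_derivative_inner[OF has_derivative_ident has_derivative_ident]])
      (auto simp: inner_commute)
  show "((\<lambda>y. 2 *\<^sub>R y) has_derivative (\<lambda>h. 2 *\<^sub>R h)) (at y)"
    by (intro derivative_intros)
qed auto

lemma C2L_affine: fixes \<tau> :: "real^'n" shows "C2L S (\<lambda>y. c + \<tau> \<bullet> y) (\<lambda>y. \<tau>) (\<lambda>y h. 0)"
proof (rule C2LI)
  fix y :: "real^'n"
  show "((\<lambda>y. c + \<tau> \<bullet> y) has_derivative (\<lambda>h. \<tau> \<bullet> h)) (at y)"
    by (rule has_derivative_eq_rhs[OF has_derivative_add[OF has_derivative_const has_derivative_inner_right[OF has_derivative_ident]]]) auto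
qed auto

lemma C2L_const: "C2L S (\<lambda>y. c) (\<lambda>y. 0) (\<lambda>y h. 0)"
  by (rule C2LI) (auto intro!: derivative_eq_intros)

lemma C2L_comp_scale:
  assumes phi: "C2L T \<phi> D\<phi> L\<phi>" and b: "C2L S b Db Lb" and ST: "\<And>y. y \<in> S \<Longrightarrow> b y *\<^sub>R y \<in> T"
  shows "C2L S (\<lambda>y. \<phi> (b y *\<^sub>R y)) (\<lambda>y. (y \<bullet> D\<phi> (b y *\<^sub>R y)) *\<^sub>R Db y + b y *\<^sub>R D\<phi> (b y *\<^sub>R y))
    (\<lambda>y h. (y \<bullet> L\<phi> (b y *\<^sub>R y) (b y *\<^sub>R h + (Db y \<bullet> h) *\<^sub>R y) + h \<bullet> D\<phi> (b y *\<^sub>R y)) *\<^sub>R Db y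
        + (y \<bullet> D\<phi> (b y *\<^sub>R y)) *\<^sub>R Lb y h
        + b y *\<^sub>R L\<phi> (b y *\<^sub>R y) (b y *\<^sub>R h + (Db y \<bullet> h) *\<^sub>R y) + (Db y \<bullet> h) *\<^sub>R D\<phi> (b y *\<^sub>R y))"
proof (rule C2LI)
  fix y assume y: "y \<in> S"
  have dG: "((\<lambda>y. b y *\<^sub>R y) has_derivative (\<lambda>h. b y *\<^sub>R h + (Db y \<bullet> h) *\<^sub>R y)) (at y)"
    by (rule has_derivative_scaleR[OF C2L_hd1[OF b y] has_derivative_ident])
  show "((\<lambda>y. \<phi> (b y *\<^sub>R y)) has_derivative
     (\<lambda>h. ((y \<bullet> D\<phi> (b y *\<^sub>R y)) *\<^sub>R Db y + b y *\<^sub>R D\<phi> (b y *\<^sub>R y)) \<bullet> h)) (at y)"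
    by (rule has_derivative_eq_rhs[OF has_derivative_compose[OF dG C2L_hd1[OF phi ST[OF y]]]])
      (auto simp: inner_add_left inner_add_right algebra_simps inner_commute)
  have dDG: "((\<lambda>y. D\<phi> (b y *\<^sub>R y)) has_derivative (\<lambda>h. L\<phi> (b y *\<^sub>R y) (b y *\<^sub>R h + (Db y \<bullet> h) *\<^sub>R y))) (at y)"
    by (rule has_derivative_compose[OF dG C2L_hd2[OF phi ST[OF y]]])
  show "((\<lambda>y. (y \<bullet> D\<phi> (b y *\<^sub>R y)) *\<^sub>R Db y + b y *\<^sub>R D\<phi> (b y *\<^sub>R y)) has_derivative
     (\<lambda>h. (y \<bullet> L\<phi> (b y *\<^sub>R y) (b y *\<^sub>R h + (Db y \<bullet> h) *\<^sub>R y) + h \<bullet> D\<phi> (b y *\<^sub>R y)) *\<^sub>R Db y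
        + (y \<bullet> D\<phi> (b y *\<^sub>R y)) *\<^sub>R Lb y h
        + b y *\<^sub>R L\<phi> (b y *\<^sub>R y) (b y *\<^sub>R h + (Db y \<bullet> h) *\<^sub>R y) + (Db y \<bullet> h) *\<^sub>R D\<phi> (b y *\<^sub>R y))) (at y)"
    by (rule has_derivative_eq_rhs[OF has_derivative_add[OF
        has_derivative_scaleR[OF has_derivative_inner[OF has_derivative_ident dDG] C2L_hd2[OF b y]]
        has_derivative_scaleR[OF C2L_hd1[OF b y] dDG]]])
      (auto simp: algebra_simps)
next
  fix h
  have cb: "continuous_on S b" by (rule C2L_contf[OF b])
  have cG: "continuous_on S (\<lambda>y. b y *\<^sub>R y)" using cb by (intro continuous_intros)
  have img: "(\<lambda>y. b y *\<^sub>R y) ` S \<subseteq> T" using ST by auto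
  have cD: "continuous_on S (\<lambda>y. D\<phi> (b y *\<^sub>R y))"
    by (rule continuous_on_compose2[OF C2L_contD[OF phi] cG img])
  have cL: "continuous_on S (\<lambda>y. L\<phi> (b y *\<^sub>R y) (b y *\<^sub>R h + (Db y \<bullet> h) *\<^sub>R y))"
    by (rule C2L_contL2[OF phi cG img]) (use cb C2L_contD[OF b] in \<open>intro continuous_intros\<close>)
  show "continuous_on S (\<lambda>y. (y \<bullet> L\<phi> (b y *\<^sub>R y) (b y *\<^sub>R h + (Db y \<bullet> h) *\<^sub>R y) + h \<bullet> D\<phi> (b y *\<^sub>R y)) *\<^sub>R Db y
        + (y \<bullet> D\<phi> (b y *\<^sub>R y)) *\<^sub>R Lb y h
        + b y *\<^sub>R L\<phi> (b y *\<^sub>R y) (b y *\<^sub>R h + (Db y \<bullet> h) *\<^sub>R y) + (Db y \<bullet> h) *\<^sub>R D\<phi> (b y *\<^sub>R y))"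
    using cb cD cL C2L_contD[OF b] C2L_contL[OF b continuous_on_const]
    by (intro continuous_intros) auto
qed

lemma line_deriv1:
  assumes "(f has_derivative (\<lambda>h. D \<bullet> h)) (at (a + t *\<^sub>R v))"
  shows "((\<lambda>t. f (a + t *\<^sub>R v)) has_real_derivative (D \<bullet> v)) (at t)"
proof -
  have l: "((\<lambda>t. a + t *\<^sub>R v) has_derivative (\<lambda>t. t *\<^sub>R v)) (at t)"
    by (auto intro!: derivative_eq_intros)
  show ?thesis unfolding has_field_derivative_def
    by (rule has_derivative_eq_rhs[OF has_derivative_compose[OF l assms]]) (auto simp: mult.commute)
qed

lemma line_deriv2:
  assumes "(Df has_derivative L) (at (a + t *\<^sub>R v))"
  shows "((\<lambda>t. Df (a + t *\<^sub>R v) \<bullet> w) has_real_derivative (L v \<bullet> w)) (at t)"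
proof -
  have l: "((\<lambda>t. a + t *\<^sub>R v) has_derivative (\<lambda>t. t *\<^sub>R v)) (at t)"
    by (auto intro!: derivative_eq_intros)
  have lin: "linear L" using assms by (rule has_derivative_linear)
  show ?thesis unfolding has_field_derivative_def
    by (rule has_derivative_eq_rhs[OF has_derivative_inner_left[OF has_derivative_compose[OF l assms]]])
      (auto simp: linear_cmul[OF lin] mult.commute)
qed

lemma C2L_schwarz_aux:
  assumes C: "C2L S f Df L" and B: "ball x d \<subseteq> S" and s: "s > 0" "s * (norm v + norm w) < d"
  shows "\<exists>\<xi>. dist \<xi> x \<le> s * (norm v + norm w) \<and>
     f (x + s *\<^sub>R w + s *\<^sub>R v) - f (x + s *\<^sub>R v) - f (x + s *\<^sub>R w) + f x = s * s * (v \<bullet> L \<xi> w)"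
proof -
  have inS: "x + t *\<^sub>R v + r *\<^sub>R w \<in> S" if "0 \<le> t" "t \<le> s" "0 \<le> r" "r \<le> s" for t r
  proof -
    have "norm (t *\<^sub>R v + r *\<^sub>R w) \<le> t * norm v + r * norm w"
      using that by (metis abs_of_nonneg norm_scaleR norm_triangle_ineq)
    also have "\<dots> \<le> s * norm v + s * norm w" using that by (intro add_mono mult_right_mono) auto
    finally have "dist (x + t *\<^sub>R v + r *\<^sub>R w) x < d" using s by (simp add: dist_norm algebra_simps)
    then show ?thesis using B by (auto simp: dist_commute)
  qed
  define h where "h t = f ((x + s *\<^sub>R w) + t *\<^sub>R v) - f (x + t *\<^sub>R v)" for t
  have dh: "(h has_real_derivative (Df ((x + s *\<^sub>R w) + t *\<^sub>R v) \<bullet> v - Df (x + t *\<^sub>R v) \<bullet> v)) (at t)"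
    if "0 \<le> t" "t \<le> s" for t
  proof -
    have q: "x + t *\<^sub>R v + s *\<^sub>R w \<in> S" using s by (intro inS that) auto
    have "(x + s *\<^sub>R w) + t *\<^sub>R v = x + t *\<^sub>R v + s *\<^sub>R w" by (simp add: algebra_simps)
    then have p1: "(x + s *\<^sub>R w) + t *\<^sub>R v \<in> S" using q by metis
    have p2: "x + t *\<^sub>R v \<in> S" using inS[OF that order.refl] s by simp
    show ?thesis unfolding h_def
      by (intro DERIV_diff line_deriv1 C2L_hd1[OF C] p1 p2[unfolded add_0_right])
  qed
  obtain t1 where t1: "0 < t1" "t1 < s" "h s - h 0 = (s - 0) *
      (Df ((x + s *\<^sub>R w) + t1 *\<^sub>R v) \<bullet> v - Df (x + t1 *\<^sub>R v) \<bullet> v)"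
    using MVT2[OF s(1), of h, OF dh] by auto
  define k where "k r = Df ((x + t1 *\<^sub>R v) + r *\<^sub>R w) \<bullet> v" for r
  have dk: "(k has_real_derivative (L ((x + t1 *\<^sub>R v) + r *\<^sub>R w) w \<bullet> v)) (at r)"
    if "0 \<le> r" "r \<le> s" for r
  proof -
    have "(x + t1 *\<^sub>R v) + r *\<^sub>R w \<in> S" using inS[of t1 r] t1 that by auto
    then show ?thesis unfolding k_def by (intro line_deriv2 C2L_hd2[OF C])
  qed
  obtain r1 where r1: "0 < r1" "r1 < s" "k s - k 0 = (s - 0) * (L ((x + t1 *\<^sub>R v) + r1 *\<^sub>R w) w \<bullet> v)"
    using MVT2[OF s(1), of k, OF dk] by auto
  define \<xi> where "\<xi> = (x + t1 *\<^sub>R v) + r1 *\<^sub>R w"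
  have "dist \<xi> x = norm (t1 *\<^sub>R v + r1 *\<^sub>R w)" by (simp add: \<xi>_def dist_norm)
  also have "\<dots> \<le> t1 * norm v + r1 * norm w"
    using t1 r1 by (metis abs_of_nonneg less_imp_le norm_scaleR norm_triangle_ineq)
  also have "\<dots> \<le> s * norm v + s * norm w" using t1 r1 by (intro add_mono mult_right_mono) auto
  finally have dxi: "dist \<xi> x \<le> s * (norm v + norm w)" by (simp add: algebra_simps)
  have "k s - k 0 = Df ((x + s *\<^sub>R w) + t1 *\<^sub>R v) \<bullet> v - Df (x + t1 *\<^sub>R v) \<bullet> v"
    unfolding k_def by (simp add: algebra_simps)
  then have "h s - h 0 = s * s * (v \<bullet> L \<xi> w)"
    using t1(3) r1(3) by (simp add: \<xi>_def inner_commute)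
  moreover have "h s - h 0 = f (x + s *\<^sub>R w + s *\<^sub>R v) - f (x + s *\<^sub>R v) - f (x + s *\<^sub>R w) + f x"
    by (simp add: h_def)
  ultimately show ?thesis using dxi by metis
qed

lemma C2L_sym:
  assumes C: "C2L S f Df L" and S: "open S" "x \<in> S"
  shows "v \<bullet> L x w = w \<bullet> L x v"
proof (rule ccontr)
  assume ne: "v \<bullet> L x w \<noteq> w \<bullet> L x v"
  define e where "e = \<bar>v \<bullet> L x w - w \<bullet> L x v\<bar> / 2"
  have e: "e > 0" using ne by (simp add: e_def)
  obtain d0 where d0: "d0 > 0" "ball x d0 \<subseteq> S" using S by (meson openE)
  have c1: "continuous_on S (\<lambda>y. v \<bullet> L y w)"
    using C2L_contL[OF C continuous_on_const] by (intro continuous_intros)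
  have c2: "continuous_on S (\<lambda>y. w \<bullet> L y v)"
    using C2L_contL[OF C continuous_on_const] by (intro continuous_intros)
  obtain d1 where d1: "d1 > 0" "\<And>y. y \<in> S \<Longrightarrow> dist y x < d1 \<Longrightarrow> dist (v \<bullet> L y w) (v \<bullet> L x w) < e"
    using c1 S(2) e unfolding continuous_on_iff by metis
  obtain d2 where d2: "d2 > 0" "\<And>y. y \<in> S \<Longrightarrow> dist y x < d2 \<Longrightarrow> dist (w \<bullet> L y v) (w \<bullet> L x v) < e"
    using c2 S(2) e unfolding continuous_on_iff by metis
  define d where "d = min d0 (min d1 d2)"
  have d: "d > 0" "d \<le> d0" "d \<le> d1" "d \<le> d2" using d0 d1 d2 by (auto simp: d_def)
  define s where "s = d / (2 * (norm v + norm w + 1))"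
  have np: "norm v + norm w + 1 > 0" by (simp add: add_nonneg_pos)
  have s: "s > 0" using d np by (simp add: s_def)
  have "s * (norm v + norm w) \<le> s * (norm v + norm w + 1)" using s by simp
  also have "\<dots> = d / 2" using np by (simp add: s_def field_simps)
  finally have sd: "s * (norm v + norm w) < d" using d by simp
  have B: "ball x d \<subseteq> S" using d0 d by auto
  obtain \<xi>1 where x1: "dist \<xi>1 x \<le> s * (norm v + norm w)"
    "f (x + s *\<^sub>R w + s *\<^sub>R v) - f (x + s *\<^sub>R v) - f (x + s *\<^sub>R w) + f x = s * s * (v \<bullet> L \<xi>1 w)"
    using C2L_schwarz_aux[OF C B s sd] by blast
  have sd': "s * (norm w + norm v) < d" using sd by (simp add: add.commute)
  obtain \<xi>2 where x2: "dist \<xi>2 x \<le> s * (norm w + norm v)"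
    "f (x + s *\<^sub>R v + s *\<^sub>R w) - f (x + s *\<^sub>R w) - f (x + s *\<^sub>R v) + f x = s * s * (w \<bullet> L \<xi>2 v)"
    using C2L_schwarz_aux[OF C B s sd'] by blast
  have "x + s *\<^sub>R v + s *\<^sub>R w = x + s *\<^sub>R w + s *\<^sub>R v" by (simp add: algebra_simps)
  then have "s * s * (v \<bullet> L \<xi>1 w) = s * s * (w \<bullet> L \<xi>2 v)" using x1(2) x2(2) by (simp add: algebra_simps)
  then have eq: "v \<bullet> L \<xi>1 w = w \<bullet> L \<xi>2 v" using s by simp
  have m1: "dist \<xi>1 x < d" using x1(1) sd by linarith
  have m2: "dist \<xi>2 x < d" using x2(1) sd by (simp add: add.commute)
  have i1: "\<xi>1 \<in> S" using m1 B by (auto simp: dist_commute)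
  have i2: "\<xi>2 \<in> S" using m2 B by (auto simp: dist_commute)
  have "dist (v \<bullet> L \<xi>1 w) (v \<bullet> L x w) < e" using d1(2)[OF i1] m1 d by linarith
  moreover have "dist (w \<bullet> L \<xi>2 v) (w \<bullet> L x v) < e" using d2(2)[OF i2] m2 d by linarith
  ultimately have "\<bar>v \<bullet> L x w - w \<bullet> L x v\<bar> < 2 * e" using eq by (simp add: dist_real_def)
  then show False by (simp add: e_def)
qed

lemma C2L_line_min:
  assumes C: "C2L S F DF LF" and S: "open S" "x \<in> S" and dpos: "\<delta> > 0"
    and mn: "\<And>t. \<bar>t\<bar> < \<delta> \<Longrightarrow> F x \<le> F (x + t *\<^sub>R v)"
  shows "DF x \<bullet> v = 0 \<and> LF x v \<bullet> v \<ge> 0"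
proof -
  obtain d0 where d0: "d0 > 0" "ball x d0 \<subseteq> S" using S by (meson openE)
  define \<delta>' where "\<delta>' = min \<delta> (d0 / (norm v + 1))"
  have np: "norm v + 1 > 0" by (simp add: add_nonneg_pos)
  have dp: "\<delta>' > 0" using dpos d0 np by (simp add: \<delta>'_def)
  have inS: "x + t *\<^sub>R v \<in> S" if "\<bar>t\<bar> < \<delta>'" for t
  proof -
    have "\<bar>t\<bar> * norm v \<le> \<bar>t\<bar> * (norm v + 1)" by (simp add: mult_left_mono)
    also have "\<dots> < d0 / (norm v + 1) * (norm v + 1)"
      using that np by (intro mult_strict_right_mono) (auto simp: \<delta>'_def)
    also have "\<dots> = d0" using np by simp
    finally have "dist (x + t *\<^sub>R v) x < d0" by (simp add: dist_norm)
    then show ?thesis using d0 by (auto simp: dist_commute)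
  qed
  define f where "f t = F (x + t *\<^sub>R v)" for t
  have df: "(f has_real_derivative (DF (x + t *\<^sub>R v) \<bullet> v)) (at t)" if "\<bar>t\<bar> < \<delta>'" for t
    unfolding f_def by (intro line_deriv1 C2L_hd1[OF C] inS that)
  have ddf: "((\<lambda>t. DF (x + t *\<^sub>R v) \<bullet> v) has_real_derivative (LF x v \<bullet> v)) (at 0)"
    using line_deriv2[of DF "LF x" x 0 v v] C2L_hd2[OF C S(2)] by simp
  have f0: "f 0 = F x" by (simp add: f_def)
  have "DF (x + 0 *\<^sub>R v) \<bullet> v = 0"
    by (rule DERIV_local_min[OF df[of 0] dp]) (use dp mn in \<open>auto simp: f_def \<delta>'_def\<close>)
  then have first: "DF x \<bullet> v = 0" by simp
  have "LF x v \<bullet> v \<ge> 0"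
  proof (rule ccontr)
    assume "\<not> LF x v \<bullet> v \<ge> 0"
    then obtain d where d: "d > 0" "\<And>h. h > 0 \<Longrightarrow> h < d \<Longrightarrow> DF (x + (0 + h) *\<^sub>R v) \<bullet> v < DF (x + 0 *\<^sub>R v) \<bullet> v"
      using DERIV_neg_dec_right[OF ddf] by force
    define h0 where "h0 = min d \<delta>' / 2"
    have h0: "h0 > 0" "h0 < d" "h0 < \<delta>'" using d dp by (auto simp: h0_def)
    obtain z where z: "0 < z" "z < h0" "f h0 - f 0 = (h0 - 0) * (DF (x + z *\<^sub>R v) \<bullet> v)"
      using MVT2[OF h0(1), of f "\<lambda>t. DF (x + t *\<^sub>R v) \<bullet> v"] df h0 by force
    have "DF (x + z *\<^sub>R v) \<bullet> v < 0" using d(2)[of z] z h0 first by simp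
    then have "h0 * (DF (x + z *\<^sub>R v) \<bullet> v) < 0" using h0 by (simp add: mult_pos_neg)
    then have "f h0 < f 0" using z by simp
    moreover have "f 0 \<le> f h0" using mn[of h0] h0 by (simp add: f_def \<delta>'_def)
    ultimately show False by simp
  qed
  with first show ?thesis by simp
qed

lemmas mv_rsimps[simp] = matrix_vector_right_distrib matrix_vector_mult_diff_distrib matrix_vector_mult_scaleR

lemma mv_rneg[simp]: "A *v (- x) = - (A *v (x::real^'n))"
  by (simp add: matrix_vector_mult_def vec_eq_iff sum_negf)

lemma C2L_powr:
  assumes f: "C2L S f Df Lf" and pos: "\<And>y. y \<in> S \<Longrightarrow> f y > 0"
  shows "C2L S (\<lambda>y. f y powr r) (\<lambda>y. (r * f y powr (r - 1)) *\<^sub>R Df y)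
     (\<lambda>y h. (r * (r - 1) * f y powr (r - 2) * (Df y \<bullet> h)) *\<^sub>R Df y + (r * f y powr (r - 1)) *\<^sub>R Lf y h)"
proof (rule C2L_comp_real[OF f, of "{0<..}"])
  show "\<And>y. y \<in> S \<Longrightarrow> f y \<in> {0<..}" using pos by auto
  fix x :: real assume x: "x \<in> {0<..}"
  show "((\<lambda>x. x powr r) has_real_derivative r * x powr (r - 1)) (at x)"
    using DERIV_fun_powr[OF DERIV_ident, of x r] x by simp
  show "((\<lambda>x. r * x powr (r - 1)) has_real_derivative r * (r - 1) * x powr (r - 2)) (at x)"
    using DERIV_cmult[OF DERIV_fun_powr[OF DERIV_ident, of x "r - 1"], of r] x
    by (simp add: mult.assoc)
next
  show "continuous_on {0<..} (\<lambda>x. r * (r - 1) * x powr (r - 2))"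
    by (intro continuous_intros) auto
qed

lemma ereal_mult_le_iff: "c > 0 \<Longrightarrow> ereal c * g \<le> ereal v \<longleftrightarrow> g \<le> ereal (v / c)"
  by (cases g) (auto simp: field_simps)

lemma ereal_mult_eq_iff: "c > 0 \<Longrightarrow> ereal c * g = ereal v \<longleftrightarrow> g = ereal (v / c)"
  by (cases g) (auto simp: field_simps)

lemma ereal_mult_less_iff: "c > 0 \<Longrightarrow> ereal c * g < ereal v \<longleftrightarrow> g < ereal (v / c)"
  by (cases g) (auto simp: field_simps)

lemma ereal_mult_mono_pos: "c > 0 \<Longrightarrow> g \<le> ereal m \<Longrightarrow> ereal c * g \<le> ereal (c * m)"
  by (cases g) auto

lemma ereal_mult_noninf: "c > 0 \<Longrightarrow> ereal c * g \<noteq> \<infinity> \<longleftrightarrow> g \<noteq> \<infinity>"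
  by (cases g) auto

lemma inner_self_powr_half: "(y \<bullet> y) powr (1/2) = norm (y::real^'n)"
  by (simp add: norm_eq_sqrt_inner powr_half_sqrt)

lemma inner_self_powr: "(y \<bullet> y) powr (r/2) = norm (y::real^'n) powr r"
proof -
  have "(y \<bullet> y) powr (r/2) = ((y \<bullet> y) powr (1/2)) powr r" by (simp add: powr_powr)
  then show ?thesis by (simp add: inner_self_powr_half)
qed

lemma inner_self_powr_mhalf: "y \<noteq> 0 \<Longrightarrow> (y \<bullet> y) powr (-1/2) = 1 / norm (y::real^'n)"
proof -
  assume "y \<noteq> 0"
  have "(y \<bullet> y) powr (-1/2) = norm y powr (-1)" using inner_self_powr[of y "-1"] by simp
  then show ?thesis using \<open>y \<noteq> 0\<close> by (simp add: powr_minus_divide)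
qed

lemma Phi_mv: "Phi p (\<sigma>, r, q, H) *v h = H *v h - ((p - 2) * r) *\<^sub>R (h - (\<sigma> \<bullet> h) *\<^sub>R \<sigma>)
   - (p - 1) *\<^sub>R ((q \<bullet> h) *\<^sub>R \<sigma> + (\<sigma> \<bullet> h) *\<^sub>R q) + ((p - 2) * (p - 1) * r) *\<^sub>R ((\<sigma> \<bullet> h) *\<^sub>R \<sigma>)"
  unfolding Phi_def by (simp only: case_prod_conv mv_diff mv_add mv_scaleR outer_mv proj_perp_mv proj_along_mv)

lemma Phi_sym_imp: "Phi p (\<sigma>, r, q, H) \<in> Sym2 \<Longrightarrow> H \<in> Sym2"
proof -
  assume a: "Phi p (\<sigma>, r, q, H) \<in> Sym2"
  show ?thesis unfolding Sym2_iff
  proof (intro allI)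
    fix x y :: "real^'a"
    have "x \<bullet> (Phi p (\<sigma>, r, q, H) *v y) = y \<bullet> (Phi p (\<sigma>, r, q, H) *v x)" using a by (simp add: Sym2_iff)
    then have "x \<bullet> (H *v y) - ((p - 2) * r) * (x \<bullet> y - (\<sigma> \<bullet> y) * (x \<bullet> \<sigma>))
       - (p - 1) * ((q \<bullet> y) * (x \<bullet> \<sigma>) + (\<sigma> \<bullet> y) * (x \<bullet> q)) + ((p - 2) * (p - 1) * r) * ((\<sigma> \<bullet> y) * (x \<bullet> \<sigma>))
      = y \<bullet> (H *v x) - ((p - 2) * r) * (y \<bullet> x - (\<sigma> \<bullet> x) * (y \<bullet> \<sigma>))
       - (p - 1) * ((q \<bullet> x) * (y \<bullet> \<sigma>) + (\<sigma> \<bullet> x) * (y \<bullet> q)) + ((p - 2) * (p - 1) * r) * ((\<sigma> \<bullet> x) * (y \<bullet> \<sigma>))"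
      unfolding Phi_mv by (simp only: inner_diff_right inner_add_right inner_scaleR_right)
    moreover have "x \<bullet> y = y \<bullet> x" "x \<bullet> \<sigma> = \<sigma> \<bullet> x" "y \<bullet> \<sigma> = \<sigma> \<bullet> y"
      "x \<bullet> q = q \<bullet> x" "y \<bullet> q = q \<bullet> y" by (simp_all add: inner_commute)
    ultimately show "x \<bullet> (H *v y) = y \<bullet> (H *v x)"
      by (simp only:) (simp add: algebra_simps)
  qed
qed

lemma sphere_unit: "\<tau> \<in> sphere 0 1 \<longleftrightarrow> norm (\<tau>::real^'n) = 1"
  by (simp add: sphere_def)

lemma normalize_sphere: "x \<noteq> 0 \<Longrightarrow> (1 / norm x) *\<^sub>R (x::real^'n) \<in> sphere 0 1"
  by (simp add: sphere_def)

lemma hom_rel: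
  assumes rel: "\<And>x. x \<noteq> 0 \<Longrightarrow> u x = ereal (1 / norm x powr (p - 2)) * g ((1 / norm x) *\<^sub>R x)"
    and t: "t > 0" and n: "norm (\<tau>::real^'n) = 1"
  shows "u (t *\<^sub>R \<tau>) = ereal (t powr (2 - p)) * g \<tau>"
proof -
  have nz: "t *\<^sub>R \<tau> \<noteq> 0" using t n by auto
  have "norm (t *\<^sub>R \<tau>) = t" using t n by simp
  moreover have "1 / t powr (p - 2) = t powr (2 - p)"
    using t by (simp add: powr_minus_divide[symmetric])
  ultimately show ?thesis using rel[OF nz] t by simp
qed

lemma rel_sphere:
  assumes rel: "\<And>x. x \<noteq> 0 \<Longrightarrow> u x = ereal (1 / norm x powr (p - 2)) * g ((1 / norm x) *\<^sub>R x)"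
    and n: "norm (\<tau>::real^'n) = 1"
  shows "u \<tau> = g \<tau>"
  using hom_rel[OF rel zero_less_one n] by simp

lemma hom_scale:
  assumes rel: "\<And>x. x \<noteq> 0 \<Longrightarrow> u x = ereal (1 / norm x powr (p - 2)) * g ((1 / norm x) *\<^sub>R x)"
    and r: "\<rho> > 0" and y: "(y::real^'n) \<noteq> 0"
  shows "u (\<rho> *\<^sub>R y) = ereal (\<rho> powr (2 - p)) * u y"
proof -
  have ny: "norm y > 0" using y by simp
  have n1: "norm ((1 / norm y) *\<^sub>R y) = 1" using y by simp
  have "\<rho> *\<^sub>R y = (\<rho> * norm y) *\<^sub>R ((1 / norm y) *\<^sub>R y)" using ny by simp
  then have "u (\<rho> *\<^sub>R y) = ereal ((\<rho> * norm y) powr (2 - p)) * g ((1 / norm y) *\<^sub>R y)"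
    using hom_rel[OF rel _ n1, of "\<rho> * norm y"] r ny by simp
  also have "\<dots> = ereal (\<rho> powr (2 - p)) * (ereal (norm y powr (2 - p)) * g ((1 / norm y) *\<^sub>R y))"
    using r ny by (simp add: powr_mult flip: mult.assoc)
  also have "ereal (norm y powr (2 - p)) * g ((1 / norm y) *\<^sub>R y) = u y"
    using hom_rel[OF rel ny n1] ny by simp
  finally show ?thesis .
qed

lemma usc_transfer:
  assumes rel: "\<And>x. x \<noteq> 0 \<Longrightarrow> u x = ereal (1 / norm x powr (p - 2)) * g ((1 / norm x) *\<^sub>R x)"
  shows "usc_on (- {0}) u \<longleftrightarrow> usc_on (sphere 0 (1::real)) (g :: real^'n \<Rightarrow> ereal)"
proof
  assume U: "usc_on (- {0}) u"
  have ug: "u \<tau> = g \<tau>" if "\<tau> \<in> sphere 0 1" for \<tau> using rel_sphere[OF rel] that by (simp add: sphere_unit)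
  have nz: "\<tau> \<in> sphere 0 1 \<Longrightarrow> \<tau> \<in> - {0}" for \<tau> :: "real^'n" by auto
  show "usc_on (sphere 0 1) g" unfolding usc_on_def
  proof (intro conjI ballI allI impI)
    fix x :: "real^'n" assume x: "x \<in> sphere 0 1"
    show "g x \<noteq> \<infinity>" using U nz[OF x] ug[OF x] unfolding usc_on_def by metis
    fix c assume "g x < c"
    then have "u x < c" using ug[OF x] by simp
    then obtain e where e: "e > 0" "\<forall>y\<in>- {0}. dist y x < e \<longrightarrow> u y < c"
      using U nz[OF x] unfolding usc_on_def by metis
    show "\<exists>e>0. \<forall>y\<in>sphere 0 1. dist y x < e \<longrightarrow> g y < c"
      using e ug nz by metis
  qed
next
  assume G: "usc_on (sphere 0 1) g"
  show "usc_on (- {0}) u" unfolding usc_on_def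
  proof (intro conjI ballI allI impI)
    fix x :: "real^'n" assume x: "x \<in> - {0}"
    then have x0: "x \<noteq> 0" by simp
    define c where "c y = 1 / norm y powr (p - 2)" for y :: "real^'n"
    define s where "s y = (1 / norm y) *\<^sub>R y" for y :: "real^'n"
    have cpos: "c y > 0" if "y \<noteq> 0" for y using that by (simp add: c_def)
    have sx: "s x \<in> sphere 0 1" using x0 by (simp add: s_def sphere_def)
    have ux: "u x = ereal (c x) * g (s x)" using rel[OF x0] by (simp add: c_def s_def)
    have gfin: "g (s x) \<noteq> \<infinity>" using G sx unfolding usc_on_def by blast
    show "u x \<noteq> \<infinity>" by (simp only: ux ereal_mult_noninf[OF cpos[OF x0]] gfin) simp
    fix C assume "u x < C"
    then obtain C1 where C1: "u x < ereal C1" "ereal C1 < C" using ereal_dense2 by blast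
    then have "g (s x) < ereal (C1 / c x)" using ux ereal_mult_less_iff[OF cpos[OF x0]] by simp
    then obtain m where m: "g (s x) < ereal m" "ereal m < ereal (C1 / c x)" using ereal_dense2 by blast
    have cm: "c x * m < C1" using m(2) cpos[OF x0] by (simp add: field_simps)
    have cc: "continuous_on (- {0}) (\<lambda>y. c y * m)" unfolding c_def
      by (intro continuous_intros) auto
    obtain e1 where e1: "e1 > 0" "\<forall>y\<in>- {0}. dist y x < e1 \<longrightarrow> dist (c y * m) (c x * m) < C1 - c x * m"
      using cc x cm unfolding continuous_on_iff by (metis diff_gt_0_iff_gt)
    obtain e2 where e2: "e2 > 0" "\<forall>y\<in>sphere 0 1. dist y (s x) < e2 \<longrightarrow> g y < ereal m"
      using G sx m(1) unfolding usc_on_def by metis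
    have cs: "continuous_on (- {0}) s" unfolding s_def by (intro continuous_intros) auto
    obtain e3 where e3: "e3 > 0" "\<forall>y\<in>- {0}. dist y x < e3 \<longrightarrow> dist (s y) (s x) < e2"
      using cs x e2(1) unfolding continuous_on_iff by metis
    show "\<exists>e>0. \<forall>y\<in>- {0}. dist y x < e \<longrightarrow> u y < C"
    proof (intro exI[of _ "min e1 e3"] conjI ballI impI)
      show "min e1 e3 > 0" using e1 e3 by simp
      fix y assume y: "y \<in> - {0}" "dist y x < min e1 e3"
      then have y0: "y \<noteq> 0" by simp
      have "s y \<in> sphere 0 1" using y0 by (simp add: s_def sphere_def)
      then have "g (s y) < ereal m" using e2 e3 y by simp
      then have "u y \<le> ereal (c y * m)" using rel[OF y0] ereal_mult_mono_pos[OF cpos[OF y0]]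
        by (simp add: c_def s_def less_imp_le)
      also have "c y * m < C1" using e1(2) y by (auto simp: dist_real_def)
      then have "ereal (c y * m) < ereal C1" by simp
      finally show "u y < C" using C1(2) by simp
    qed
  qed
qed

lemma dir1_hess:
  assumes C: "C2L T \<phi> D\<phi> (\<lambda>y h. H\<phi> y *v h)" and n: "norm \<sigma> = 1"
    and ST: "\<And>y. y \<in> S \<Longrightarrow> y \<noteq> 0 \<and> (1 / norm y) *\<^sub>R y \<in> T"
  shows "\<exists>D L. C2L S (\<lambda>y. (y \<bullet> y) powr ((2 - p) / 2) * \<phi> ((y \<bullet> y) powr (-1/2) *\<^sub>R y)) D L \<and>
     (\<sigma> \<in> S \<longrightarrow> (\<forall>h. L \<sigma> h = Phi p (jet2_sphere \<phi> D\<phi> H\<phi> \<sigma>) *v h))"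
proof -
  have pos: "y \<bullet> y > 0" if "y \<in> S" for y using ST[OF that] by simp
  have inT: "(y \<bullet> y) powr (-1/2) *\<^sub>R y \<in> T" if "y \<in> S" for y
    using ST[OF that] inner_self_powr_mhalf[of y] by simp
  note Ca = C2L_powr[OF C2L_inner_self pos, where r="(2 - p) / 2"]
  note Cb = C2L_powr[OF C2L_inner_self pos, where r="-1/2"]
  note Cc = C2L_mult[OF Ca C2L_comp_scale[OF C Cb inT]]
  have ss: "\<sigma> \<bullet> \<sigma> = 1" using n by (simp add: dot_square_norm)
  show ?thesis
    apply (intro exI conjI impI allI)
     apply (rule Cc) apply blast+
    subgoal for h
    proof -
      obtain c where c1: "D\<phi> \<sigma> \<bullet> h = c" by blast
      then have c2: "h \<bullet> D\<phi> \<sigma> = c" by (simp add: inner_commute)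
      show ?thesis
        apply (simp add: ss jet2_sphere_def Phi_mv inner_diff_left inner_diff_right inner_add_left inner_add_right
            c1 c2 vec_eq_iff)
        apply (simp add: algebra_simps)
        apply (simp add: field_simps)
        done
    qed
    done
qed

lemma open_S1: "open {y::real^'n. y \<noteq> 0 \<and> (1 / norm y) *\<^sub>R y \<in> ball \<sigma> e}"
proof -
  have c: "continuous_on (- {0}) (\<lambda>y::real^'n. (1 / norm y) *\<^sub>R y)" by (intro continuous_intros) auto
  have "open (- {0} \<inter> (\<lambda>y::real^'n. (1 / norm y) *\<^sub>R y) -` ball \<sigma> e)"
    by (rule continuous_open_preimage[OF c]) auto
  moreover have "- {0} \<inter> (\<lambda>y::real^'n. (1 / norm y) *\<^sub>R y) -` ball \<sigma> e = {y. y \<noteq> 0 \<and> (1 / norm y) *\<^sub>R y \<in> ball \<sigma> e}"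
    by (simp add: set_eq_iff)
  ultimately show ?thesis by simp
qed

lemma dir1:
  fixes g :: "real^'n \<Rightarrow> ereal"
  assumes rel: "\<And>x. x \<noteq> 0 \<Longrightarrow> u x = ereal (1 / norm x powr (p - 2)) * g ((1 / norm x) *\<^sub>R x)"
    and GS: "G \<subseteq> Sym2" and U: "F_subharmonic G (- {0}) u" and Ug: "usc_on (sphere 0 1) g"
  shows "sphere_subharmonic (F_sphere p G) g"
  unfolding sphere_subharmonic_def
proof (intro conjI Ug ballI allI impI)
  fix \<sigma> :: "real^'n" and \<phi> D\<phi> H\<phi>
  assume \<sigma>: "\<sigma> \<in> sphere 0 1" and C2: "C2_near \<phi> D\<phi> H\<phi> \<sigma>"
    and T: "\<exists>e>0. \<forall>\<tau>\<in>sphere 0 1. dist \<tau> \<sigma> < e \<longrightarrow> g \<tau> \<le> ereal (\<phi> \<tau>)"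
    and E: "g \<sigma> = ereal (\<phi> \<sigma>)"
  have n\<sigma>: "norm \<sigma> = 1" using \<sigma> by simp
  have ss: "\<sigma> \<bullet> \<sigma> = 1" using n\<sigma> by (simp add: dot_square_norm)
  obtain e0 where e0: "e0 > 0" and C: "C2L (ball \<sigma> e0) \<phi> D\<phi> (\<lambda>y h. H\<phi> y *v h)"
    using C2_near_C2L[OF C2] by blast
  define S where "S = {y::real^'n. y \<noteq> 0 \<and> (1 / norm y) *\<^sub>R y \<in> ball \<sigma> e0}"
  have oS: "open S" unfolding S_def by (rule open_S1)
  have \<sigma>S: "\<sigma> \<in> S" using n\<sigma> e0 by (auto simp: S_def)
  obtain D L where CL: "C2L S (\<lambda>y. (y \<bullet> y) powr ((2 - p) / 2) * \<phi> ((y \<bullet> y) powr (-1/2) *\<^sub>R y)) D L"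
    and LL: "\<And>h. L \<sigma> h = Phi p (jet2_sphere \<phi> D\<phi> H\<phi> \<sigma>) *v h"
    using dir1_hess[OF C n\<sigma>, of S p] \<sigma>S unfolding S_def by blast
  define \<psi> where "\<psi> y = (y \<bullet> y) powr ((2 - p) / 2) * \<phi> ((y \<bullet> y) powr (-1/2) *\<^sub>R y)" for y
  have C2n: "C2_near \<psi> D (\<lambda>y. matrix (L y)) \<sigma>"
    using C2L_C2_near[OF CL oS \<sigma>S] unfolding \<psi>_def .
  obtain e where e: "e > 0" "\<forall>\<tau>\<in>sphere 0 1. dist \<tau> \<sigma> < e \<longrightarrow> g \<tau> \<le> ereal (\<phi> \<tau>)" using T by blast
  have cs: "continuous_on (- {0}) (\<lambda>y::real^'n. (1 / norm y) *\<^sub>R y)" by (intro continuous_intros) auto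
  have \<sigma>0: "\<sigma> \<in> - {0}" using n\<sigma> by auto
  have "\<exists>d>0. \<forall>y\<in>- {0}. dist y \<sigma> < d \<longrightarrow> dist ((1 / norm y) *\<^sub>R y) ((1 / norm \<sigma>) *\<^sub>R \<sigma>) < e"
    using cs \<sigma>0 e(1) unfolding continuous_on_iff by blast
  then obtain e3 where e3: "e3 > 0" "\<forall>y\<in>- {0}. dist y \<sigma> < e3 \<longrightarrow> dist ((1 / norm y) *\<^sub>R y) \<sigma> < e"
    using n\<sigma> by auto
  have test: "\<exists>e>0. \<forall>y\<in>- {0}. dist y \<sigma> < e \<longrightarrow> u y \<le> ereal (\<psi> y)"
  proof (intro exI[of _ e3] conjI ballI impI e3(1))
    fix y :: "real^'n" assume y: "y \<in> - {0}" "dist y \<sigma> < e3"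
    then have y0: "y \<noteq> 0" by simp
    have "dist ((1 / norm y) *\<^sub>R y) \<sigma> < e" using e3(2) y by blast
    moreover have "(1 / norm y) *\<^sub>R y \<in> sphere 0 1" using y0 by (simp add: sphere_def)
    ultimately have "g ((1 / norm y) *\<^sub>R y) \<le> ereal (\<phi> ((1 / norm y) *\<^sub>R y))" using e(2) by blast
    then have "u y \<le> ereal (1 / norm y powr (p - 2) * \<phi> ((1 / norm y) *\<^sub>R y))"
      using rel[OF y0] ereal_mult_mono_pos[of "1 / norm y powr (p - 2)"] y0 by simp
    also have "1 / norm y powr (p - 2) * \<phi> ((1 / norm y) *\<^sub>R y) = \<psi> y"
      unfolding \<psi>_def using y0 inner_self_powr[of y "2 - p"] inner_self_powr_mhalf[OF y0]
      by (simp add: powr_minus_divide[symmetric])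
    finally show "u y \<le> ereal (\<psi> y)" .
  qed
  have u\<sigma>: "u \<sigma> = ereal (\<psi> \<sigma>)"
    using rel_sphere[OF rel n\<sigma>] E by (simp add: \<psi>_def ss)
  have A: "\<forall>x\<in>- {0}. \<forall>phi Dphi Hphi. C2_near phi Dphi Hphi x \<longrightarrow>
        (\<exists>e>0. \<forall>y\<in>- {0}. dist y x < e \<longrightarrow> u y \<le> ereal (phi y)) \<longrightarrow>
        u x = ereal (phi x) \<longrightarrow> Hphi x \<in> G" using U unfolding F_subharmonic_def by blast
  have Min: "matrix (L \<sigma>) \<in> G" using A[rule_format, OF \<sigma>0 C2n test u\<sigma>] by simp
  have eqM: "matrix (L \<sigma>) = Phi p (jet2_sphere \<phi> D\<phi> H\<phi> \<sigma>)"
    unfolding matrix_eq using C2L_mv[OF CL \<sigma>S] LL by simp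
  have PG: "Phi p (jet2_sphere \<phi> D\<phi> H\<phi> \<sigma>) \<in> G" using Min eqM by simp
  have HS: "proj_perp \<sigma> ** H\<phi> \<sigma> ** proj_perp \<sigma> - (\<sigma> \<bullet> D\<phi> \<sigma>) *\<^sub>R proj_perp \<sigma> \<in> Sym2"
    using PG GS Phi_sym_imp unfolding jet2_sphere_def by blast
  show "jet2_sphere \<phi> D\<phi> H\<phi> \<sigma> \<in> F_sphere p G"
    unfolding F_sphere_def J2_sphere_def
    using PG HS \<sigma> ss inner_commute[of "D\<phi> \<sigma>" \<sigma>] by (simp add: jet2_sphere_def inner_diff_left inner_diff_right)
qed

lemma dir2_hess:
  assumes C: "C2L T \<psi> D\<psi> (\<lambda>y h. H\<psi> y *v h)" and n: "norm \<sigma> = 1" and t\<sigma>: "\<tau> \<bullet> \<sigma> = 0"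
    and ST: "\<And>y. y \<in> S \<Longrightarrow> 1 + \<tau> \<bullet> y > 0 \<and> (1 + \<tau> \<bullet> y) *\<^sub>R y \<in> T"
    and fo: "\<sigma> \<bullet> D\<psi> \<sigma> = k * \<psi> \<sigma>"
  shows "\<exists>D L. C2L S (\<lambda>y. (1 + \<tau> \<bullet> y) powr (-k) * \<psi> ((1 + \<tau> \<bullet> y) *\<^sub>R y)) D L \<and>
     (\<sigma> \<in> S \<longrightarrow> D \<sigma> = D\<psi> \<sigma> \<and> (\<forall>h. L \<sigma> h = H\<psi> \<sigma> *v h + (\<tau> \<bullet> h) *\<^sub>R (H\<psi> \<sigma> *v \<sigma>)
        + (\<sigma> \<bullet> (H\<psi> \<sigma> *v h) + (\<tau> \<bullet> h) * (\<sigma> \<bullet> (H\<psi> \<sigma> *v \<sigma>))) *\<^sub>R \<tau>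
        + (1 - k) *\<^sub>R ((\<tau> \<bullet> h) *\<^sub>R D\<psi> \<sigma> + (D\<psi> \<sigma> \<bullet> h) *\<^sub>R \<tau>) + (k * (1 - k) * \<psi> \<sigma> * (\<tau> \<bullet> h)) *\<^sub>R \<tau>))"
proof -
  have pos: "1 + \<tau> \<bullet> y > 0" if "y \<in> S" for y using ST[OF that] by simp
  have inT: "(1 + \<tau> \<bullet> y) *\<^sub>R y \<in> T" if "y \<in> S" for y using ST[OF that] by simp
  note Cb = C2L_affine[of S 1 \<tau>]
  note Ca = C2L_powr[OF Cb pos, where r="-k"]
  note Cc = C2L_mult[OF Ca C2L_comp_scale[OF C Cb inT]]
  have ss: "\<sigma> \<bullet> \<sigma> = 1" using n by (simp add: dot_square_norm)
  have ts: "\<sigma> \<bullet> \<tau> = 0" using t\<sigma> by (simp add: inner_commute)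
  show ?thesis
    apply (intro exI conjI impI allI)
      apply (rule Cc) apply blast+
    subgoal using ss t\<sigma> ts fo by (simp add: algebra_simps)
    subgoal for h
    proof -
      obtain c where c1: "D\<psi> \<sigma> \<bullet> h = c" by blast
      then have c2: "h \<bullet> D\<psi> \<sigma> = c" by (simp add: inner_commute)
      show ?thesis
        apply (simp add: ss t\<sigma> ts fo inner_diff_left inner_diff_right inner_add_left inner_add_right
            c1 c2 vec_eq_iff)
        apply (simp add: algebra_simps)
        done
    qed
    done
qed

lemma radial_hess:
  assumes C: "C2L T \<psi> D\<psi> (\<lambda>y h. H\<psi> y *v h)" and n: "norm \<sigma> = 1"
    and ST: "\<And>y. y \<in> S \<Longrightarrow> y \<noteq> 0 \<and> y \<in> T"
  shows "\<exists>D L. C2L S (\<lambda>y. (y \<bullet> y) powr (-k/2) * \<psi> y) D L \<and>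
     (\<sigma> \<in> S \<longrightarrow> D \<sigma> \<bullet> \<sigma> = \<sigma> \<bullet> D\<psi> \<sigma> - k * \<psi> \<sigma> \<and>
        L \<sigma> \<sigma> \<bullet> \<sigma> = \<sigma> \<bullet> (H\<psi> \<sigma> *v \<sigma>) - 2 * k * (\<sigma> \<bullet> D\<psi> \<sigma>) + k * (k + 1) * \<psi> \<sigma>)"
proof -
  have pos: "y \<bullet> y > 0" if "y \<in> S" for y using ST[OF that] by simp
  have sub: "S \<subseteq> T" using ST by auto
  note Ca = C2L_powr[OF C2L_inner_self pos, where r="-k/2"]
  note Cc = C2L_mult[OF Ca C2L_subset[OF C sub]]
  have ss: "\<sigma> \<bullet> \<sigma> = 1" using n by (simp add: dot_square_norm)
  have dd: "D\<psi> \<sigma> \<bullet> \<sigma> = \<sigma> \<bullet> D\<psi> \<sigma>" by (simp add: inner_commute)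
  have mm: "(H\<psi> \<sigma> *v \<sigma>) \<bullet> \<sigma> = \<sigma> \<bullet> (H\<psi> \<sigma> *v \<sigma>)" by (simp add: inner_commute)
  show ?thesis
    apply (intro exI conjI impI allI)
      apply (rule Cc) apply blast+
    subgoal using ss dd by (simp add: algebra_simps inner_add_left)
    subgoal using ss dd mm by (simp add: algebra_simps inner_add_left field_simps)
    done
qed

lemma powr_sq_half: "(x::real) > 0 \<Longrightarrow> (x * x) powr (-k/2) = x powr (-k)"
proof -
  assume x: "x > 0"
  have "(x * x) powr (-k/2) = x powr (-k/2) * x powr (-k/2)" using x by (simp add: powr_mult)
  also have "\<dots> = x powr (-k/2 + -k/2)" by (rule powr_add[symmetric])
  finally show ?thesis by simp
qed

lemma radial:
  assumes C: "C2L (ball \<sigma> e0) \<psi> D\<psi> (\<lambda>y h. H\<psi> y *v h)" and e0: "e0 > 0" and n: "norm \<sigma> = 1"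
    and d: "\<delta> > 0" and mn: "\<And>t. \<bar>t\<bar> < \<delta> \<Longrightarrow> \<psi> \<sigma> \<le> (1 + t) powr (-k) * \<psi> ((1 + t) *\<^sub>R \<sigma>)"
  shows "\<sigma> \<bullet> D\<psi> \<sigma> = k * \<psi> \<sigma> \<and> k * (k - 1) * \<psi> \<sigma> \<le> \<sigma> \<bullet> (H\<psi> \<sigma> *v \<sigma>)"
proof -
  define S where "S = ball \<sigma> (min e0 1)"
  have ST: "y \<noteq> 0 \<and> y \<in> ball \<sigma> e0" if "y \<in> S" for y
    using that n by (auto simp: S_def dist_norm)
  have \<sigma>S: "\<sigma> \<in> S" using e0 by (simp add: S_def)
  obtain D L where CL: "C2L S (\<lambda>y. (y \<bullet> y) powr (-k/2) * \<psi> y) D L"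
    and D1: "D \<sigma> \<bullet> \<sigma> = \<sigma> \<bullet> D\<psi> \<sigma> - k * \<psi> \<sigma>"
    and L1: "L \<sigma> \<sigma> \<bullet> \<sigma> = \<sigma> \<bullet> (H\<psi> \<sigma> *v \<sigma>) - 2 * k * (\<sigma> \<bullet> D\<psi> \<sigma>) + k * (k + 1) * \<psi> \<sigma>"
    using radial_hess[OF C n ST, of S k] \<sigma>S by blast
  have ss: "\<sigma> \<bullet> \<sigma> = 1" using n by (simp add: dot_square_norm)
  have m: "(\<sigma> \<bullet> \<sigma>) powr (-k/2) * \<psi> \<sigma> \<le> ((\<sigma> + t *\<^sub>R \<sigma>) \<bullet> (\<sigma> + t *\<^sub>R \<sigma>)) powr (-k/2) * \<psi> (\<sigma> + t *\<^sub>R \<sigma>)"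
    if t: "\<bar>t\<bar> < min \<delta> 1" for t
  proof -
    have tp: "1 + t > 0" using t by auto
    have e1: "\<sigma> + t *\<^sub>R \<sigma> = (1 + t) *\<^sub>R \<sigma>" by (simp add: algebra_simps)
    have e2: "(\<sigma> + t *\<^sub>R \<sigma>) \<bullet> (\<sigma> + t *\<^sub>R \<sigma>) = (1 + t) * (1 + t)"
      unfolding e1 using ss by simp
    show ?thesis unfolding e2 powr_sq_half[OF tp] using mn[of t] t ss e1 by simp
  qed
  have r: "D \<sigma> \<bullet> \<sigma> = 0 \<and> L \<sigma> \<sigma> \<bullet> \<sigma> \<ge> 0"
    by (rule C2L_line_min[OF CL _ \<sigma>S, of "min \<delta> 1"]) (use d m in \<open>auto simp: S_def\<close>)
  then show ?thesis using D1 L1 by (auto simp: algebra_simps)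
qed

lemma quad_alg:
  fixes M X :: "real^'n^'n" and \<sigma> \<tau> d v :: "real^'n"
  assumes Msym: "\<And>x y. x \<bullet> (M *v y) = y \<bullet> (M *v x)" and n: "\<sigma> \<bullet> \<sigma> = 1" and t\<sigma>: "\<tau> \<bullet> \<sigma> = 0"
    and fo: "\<sigma> \<bullet> d = k * \<psi>0" and kp: "k = 2 - p"
    and X: "\<And>h. X *v h = M *v h + (\<tau> \<bullet> h) *\<^sub>R (M *v \<sigma>)
        + (\<sigma> \<bullet> (M *v h) + (\<tau> \<bullet> h) * (\<sigma> \<bullet> (M *v \<sigma>))) *\<^sub>R \<tau>
        + (1 - k) *\<^sub>R ((\<tau> \<bullet> h) *\<^sub>R d + (d \<bullet> h) *\<^sub>R \<tau>) + (k * (1 - k) * \<psi>0 * (\<tau> \<bullet> h)) *\<^sub>R \<tau>"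
  shows "v \<bullet> (Phi p (\<sigma>, \<psi>0, proj_perp \<sigma> *v d, proj_perp \<sigma> ** X ** proj_perp \<sigma> - (\<sigma> \<bullet> d) *\<^sub>R proj_perp \<sigma>) *v v)
     = v \<bullet> (M *v v) - ((\<sigma> \<bullet> (M *v \<sigma>) - k * (k - 1) * \<psi>0) * (\<sigma> \<bullet> v)^2
        + 2 * (\<sigma> \<bullet> v) * (\<sigma> \<bullet> (M *v v) - (\<sigma> \<bullet> v) * (\<sigma> \<bullet> (M *v \<sigma>)) + (1 - k) * (d \<bullet> v - (\<sigma> \<bullet> v) * (\<sigma> \<bullet> d)))
        - 2 * (\<tau> \<bullet> v) * (\<sigma> \<bullet> (M *v v) - (\<sigma> \<bullet> v) * (\<sigma> \<bullet> (M *v \<sigma>)) + (1 - k) * (d \<bullet> v - (\<sigma> \<bullet> v) * (\<sigma> \<bullet> d)))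
        - (\<tau> \<bullet> v)^2 * (\<sigma> \<bullet> (M *v \<sigma>) - k * (k - 1) * \<psi>0))"
proof -
  obtain dv tv sv sm mss mvv where
    a: "v \<bullet> d = dv" "d \<bullet> v = dv" "v \<bullet> \<tau> = tv" "\<tau> \<bullet> v = tv" "v \<bullet> \<sigma> = sv" "\<sigma> \<bullet> v = sv"
       "v \<bullet> (M *v \<sigma>) = sm" "\<sigma> \<bullet> (M *v v) = sm" "(M *v v) \<bullet> \<sigma> = sm" "(M *v \<sigma>) \<bullet> v = sm"
       "\<sigma> \<bullet> (M *v \<sigma>) = mss" "(M *v \<sigma>) \<bullet> \<sigma> = mss" "v \<bullet> (M *v v) = mvv"
    using Msym[of v \<sigma>] by (metis inner_commute)
  have b: "\<sigma> \<bullet> \<tau> = 0" "d \<bullet> \<sigma> = k * \<psi>0" using t\<sigma> fo by (simp_all add: inner_commute)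
  show ?thesis
    unfolding Phi_mv mv_mm mv_diff mv_scaleR proj_perp_mv X
    apply (simp add: inner_diff_left inner_diff_right inner_add_left inner_add_right a b n t\<sigma> fo kp)
    apply (simp add: algebra_simps power2_eq_square)
    done
qed

lemma open_S2: "open {y::real^'n. 0 < 1 + \<tau> \<bullet> y \<and> (1 + \<tau> \<bullet> y) *\<^sub>R y \<in> ball \<sigma> e}"
proof -
  have c: "continuous_on UNIV (\<lambda>y::real^'n. (1 + \<tau> \<bullet> y) *\<^sub>R y)" by (intro continuous_intros)
  have o1: "open (UNIV \<inter> (\<lambda>y::real^'n. (1 + \<tau> \<bullet> y) *\<^sub>R y) -` ball \<sigma> e)"
    by (rule continuous_open_preimage[OF c]) auto
  have o2: "open {y::real^'n. 0 < 1 + \<tau> \<bullet> y}"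
    by (rule open_Collect_less) (intro continuous_intros)+
  have "{y::real^'n. 0 < 1 + \<tau> \<bullet> y \<and> (1 + \<tau> \<bullet> y) *\<^sub>R y \<in> ball \<sigma> e}
      = {y::real^'n. 0 < 1 + \<tau> \<bullet> y} \<inter> (UNIV \<inter> (\<lambda>y::real^'n. (1 + \<tau> \<bullet> y) *\<^sub>R y) -` ball \<sigma> e)"
    by (simp add: set_eq_iff)
  then show ?thesis using o1 o2 by (simp add: open_Int)
qed

lemma quad_nonneg:
  fixes a \<epsilon> \<alpha> \<mu> :: real
  assumes a: "a \<ge> 0" and e: "\<epsilon> > 0"
  shows "0 \<le> \<epsilon> * \<alpha>^2 + (a * \<alpha>^2 + 2 * \<alpha> * \<mu> - 2 * (- \<mu> / (a + \<epsilon>)) * \<mu> - (- \<mu> / (a + \<epsilon>))^2 * a)"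
proof -
  obtain c where cd: "c = a + \<epsilon>" by blast
  have c: "c > 0" using a e by (simp add: cd)
  have ad: "a = c - \<epsilon>" using cd by simp
  have "(\<epsilon> * \<alpha>^2 + (a * \<alpha>^2 + 2 * \<alpha> * \<mu> - 2 * (- \<mu> / c) * \<mu> - (- \<mu> / c)^2 * a)) * c^2
      = (c * \<alpha> + \<mu>)^2 * c + \<epsilon> * \<mu>^2"
    using c unfolding ad by (simp add: field_simps power2_eq_square)
  then have "\<epsilon> * \<alpha>^2 + (a * \<alpha>^2 + 2 * \<alpha> * \<mu> - 2 * (- \<mu> / c) * \<mu> - (- \<mu> / c)^2 * a)
      = ((c * \<alpha> + \<mu>)^2 * c + \<epsilon> * \<mu>^2) / c^2"
    using c by (simp add: field_simps)
  also have "\<dots> \<ge> 0" using c e by (intro divide_nonneg_pos add_nonneg_nonneg mult_nonneg_nonneg) auto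
  finally show ?thesis using cd by simp
qed

lemma dir2_eps:
  fixes g u :: "real^'n \<Rightarrow> ereal" and \<sigma> :: "real^'n"
  assumes rel: "\<And>x. x \<noteq> 0 \<Longrightarrow> u x = ereal (1 / norm x powr (p - 2)) * g ((1 / norm x) *\<^sub>R x)"
    and GS: "G \<subseteq> Sym2" and Gpos: "\<And>A P. A \<in> G \<Longrightarrow> psd P \<Longrightarrow> A + P \<in> G"
    and Gsub: "sphere_subharmonic (F_sphere p G) g"
    and n: "norm \<sigma> = 1" and C: "C2L (ball \<sigma> e0) \<psi> D\<psi> (\<lambda>y h. H\<psi> y *v h)" and e0: "e0 > 0"
    and e1: "e1 > 0" and T1: "\<And>y. y \<noteq> 0 \<Longrightarrow> dist y \<sigma> < e1 \<Longrightarrow> u y \<le> ereal (\<psi> y)"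
    and g\<sigma>: "g \<sigma> = ereal (\<psi> \<sigma>)" and fo: "\<sigma> \<bullet> D\<psi> \<sigma> = (2 - p) * \<psi> \<sigma>"
    and a0: "(2 - p) * ((2 - p) - 1) * \<psi> \<sigma> \<le> \<sigma> \<bullet> (H\<psi> \<sigma> *v \<sigma>)" and eps: "\<epsilon> > 0"
  shows "H\<psi> \<sigma> + \<epsilon> *\<^sub>R proj_along \<sigma> \<in> G"
proof -
  define k where "k = 2 - p"
  define M where "M = H\<psi> \<sigma>"
  define d where "d = D\<psi> \<sigma>"
  have \<sigma>B: "\<sigma> \<in> ball \<sigma> e0" using e0 by simp
  have Msym: "\<And>x y. x \<bullet> (M *v y) = y \<bullet> (M *v x)"
    using C2L_sym[OF C open_ball \<sigma>B] by (simp add: M_def)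
  have ss: "\<sigma> \<bullet> \<sigma> = 1" using n by (simp add: dot_square_norm)
  define a where "a = \<sigma> \<bullet> (M *v \<sigma>) - k * (k - 1) * \<psi> \<sigma>"
  have a: "a \<ge> 0" using a0 by (simp add: a_def k_def M_def)
  define c where "c = a + \<epsilon>"
  have c: "c > 0" using a eps by (simp add: c_def)
  define m where "m = proj_perp \<sigma> *v (M *v \<sigma>) + (1 - k) *\<^sub>R (proj_perp \<sigma> *v d)"
  define \<tau> where "\<tau> = (- 1 / c) *\<^sub>R m"
  have t\<sigma>: "\<tau> \<bullet> \<sigma> = 0"
    by (simp add: \<tau>_def m_def inner_diff_left inner_add_left inner_diff_right inner_add_right ss inner_commute)
  define S where "S = {y::real^'n. 0 < 1 + \<tau> \<bullet> y \<and> (1 + \<tau> \<bullet> y) *\<^sub>R y \<in> ball \<sigma> e0}"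
  have oS: "open S" unfolding S_def by (rule open_S2)
  have \<sigma>S: "\<sigma> \<in> S" using e0 t\<sigma> by (simp add: S_def inner_commute)
  have ST: "1 + \<tau> \<bullet> y > 0 \<and> (1 + \<tau> \<bullet> y) *\<^sub>R y \<in> ball \<sigma> e0" if "y \<in> S" for y
    using that by (simp add: S_def)
  have fo': "\<sigma> \<bullet> D\<psi> \<sigma> = k * \<psi> \<sigma>" using fo by (simp add: k_def)
  obtain D L where CL: "C2L S (\<lambda>y. (1 + \<tau> \<bullet> y) powr (-k) * \<psi> ((1 + \<tau> \<bullet> y) *\<^sub>R y)) D L"
    and D\<sigma>: "D \<sigma> = D\<psi> \<sigma>"
    and L\<sigma>: "\<And>h. L \<sigma> h = H\<psi> \<sigma> *v h + (\<tau> \<bullet> h) *\<^sub>R (H\<psi> \<sigma> *v \<sigma>)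
        + (\<sigma> \<bullet> (H\<psi> \<sigma> *v h) + (\<tau> \<bullet> h) * (\<sigma> \<bullet> (H\<psi> \<sigma> *v \<sigma>))) *\<^sub>R \<tau>
        + (1 - k) *\<^sub>R ((\<tau> \<bullet> h) *\<^sub>R D\<psi> \<sigma> + (D\<psi> \<sigma> \<bullet> h) *\<^sub>R \<tau>) + (k * (1 - k) * \<psi> \<sigma> * (\<tau> \<bullet> h)) *\<^sub>R \<tau>"
    using dir2_hess[OF C n t\<sigma> ST fo'] \<sigma>S by blast
  define \<phi> where "\<phi> y = (1 + \<tau> \<bullet> y) powr (-k) * \<psi> ((1 + \<tau> \<bullet> y) *\<^sub>R y)" for y
  have C2n: "C2_near \<phi> D (\<lambda>y. matrix (L y)) \<sigma>"
    using C2L_C2_near[OF CL oS \<sigma>S] unfolding \<phi>_def .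
  have \<phi>\<sigma>: "\<phi> \<sigma> = \<psi> \<sigma>" using t\<sigma> by (simp add: \<phi>_def inner_commute)
  have test: "\<exists>e>0. \<forall>\<tau>'\<in>sphere 0 1. dist \<tau>' \<sigma> < e \<longrightarrow> g \<tau>' \<le> ereal (\<phi> \<tau>')"
  proof -
    have cf: "continuous_on UNIV (\<lambda>y::real^'n. (1 + \<tau> \<bullet> y) *\<^sub>R y)" by (intro continuous_intros)
    have cb: "continuous_on UNIV (\<lambda>y::real^'n. 1 + \<tau> \<bullet> y)" by (intro continuous_intros)
    have "\<exists>d>0. \<forall>y\<in>UNIV. dist y \<sigma> < d \<longrightarrow> dist ((1 + \<tau> \<bullet> y) *\<^sub>R y) ((1 + \<tau> \<bullet> \<sigma>) *\<^sub>R \<sigma>) < e1"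
      using cf e1 unfolding continuous_on_iff by blast
    then obtain d1 where d1: "d1 > 0" "\<And>y. dist y \<sigma> < d1 \<Longrightarrow> dist ((1 + \<tau> \<bullet> y) *\<^sub>R y) \<sigma> < e1"
      using t\<sigma> by (auto simp: inner_commute)
    have "\<exists>d>0. \<forall>y\<in>UNIV. dist y \<sigma> < d \<longrightarrow> dist (1 + \<tau> \<bullet> y) (1 + \<tau> \<bullet> \<sigma>) < 1/2"
      using cb unfolding continuous_on_iff by (meson UNIV_I half_gt_zero zero_less_one)
    then obtain d2 where d2: "d2 > 0" "\<And>y. dist y \<sigma> < d2 \<Longrightarrow> dist (1 + \<tau> \<bullet> y) (1 + \<tau> \<bullet> \<sigma>) < 1/2"
      by blast
    show ?thesis
    proof (intro exI[of _ "min d1 d2"] conjI ballI impI)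
      show "min d1 d2 > 0" using d1 d2 by simp
      fix y assume y: "y \<in> sphere 0 1" "dist y \<sigma> < min d1 d2"
      define b where "b = 1 + \<tau> \<bullet> y"
      have bp: "b > 0" using d2(2)[of y] y t\<sigma> by (auto simp: b_def dist_real_def)
      have ny: "norm y = 1" using y by simp
      have nz: "b *\<^sub>R y \<noteq> 0" using bp ny by auto
      have "u (b *\<^sub>R y) \<le> ereal (\<psi> (b *\<^sub>R y))" using T1[OF nz] d1(2)[of y] y by (simp add: b_def)
      moreover have "u (b *\<^sub>R y) = ereal (b powr (2 - p)) * g y" by (rule hom_rel[OF rel bp ny])
      ultimately have "g y \<le> ereal (\<psi> (b *\<^sub>R y) / b powr (2 - p))"
        using ereal_mult_le_iff[of "b powr (2 - p)"] bp by simp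
      also have "\<psi> (b *\<^sub>R y) / b powr (2 - p) = \<phi> y"
      proof -
        have bb: "b powr (-k) = 1 / b powr (2 - p)" unfolding k_def by (rule powr_minus_divide)
        have "\<phi> y = b powr (-k) * \<psi> (b *\<^sub>R y)" by (simp add: \<phi>_def b_def)
        then show ?thesis using bb by simp
      qed
      finally show "g y \<le> ereal (\<phi> y)" .
    qed
  qed
  have n\<sigma>s: "\<sigma> \<in> sphere 0 1" using n by simp
  have GG: "\<forall>\<sigma>\<in>sphere 0 1. \<forall>phi Dphi Hphi. C2_near phi Dphi Hphi \<sigma> \<longrightarrow>
        (\<exists>e>0. \<forall>\<tau>\<in>sphere 0 1. dist \<tau> \<sigma> < e \<longrightarrow> g \<tau> \<le> ereal (phi \<tau>)) \<longrightarrow>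
        g \<sigma> = ereal (phi \<sigma>) \<longrightarrow> jet2_sphere phi Dphi Hphi \<sigma> \<in> F_sphere p G"
    using Gsub unfolding sphere_subharmonic_def by blast
  have J: "jet2_sphere \<phi> D (\<lambda>y. matrix (L y)) \<sigma> \<in> F_sphere p G"
    using GG[rule_format, OF n\<sigma>s C2n test] g\<sigma> \<phi>\<sigma> by simp
  define Pt where "Pt = Phi p (\<sigma>, \<psi> \<sigma>, proj_perp \<sigma> *v D\<psi> \<sigma>,
      proj_perp \<sigma> ** matrix (L \<sigma>) ** proj_perp \<sigma> - (\<sigma> \<bullet> D\<psi> \<sigma>) *\<^sub>R proj_perp \<sigma>)"
  have PtG: "Pt \<in> G" using J unfolding F_sphere_def jet2_sphere_def Pt_def by (simp add: \<phi>\<sigma> D\<sigma>)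
  have Ptsym: "Pt \<in> Sym2" using PtG GS by blast
  have X: "matrix (L \<sigma>) *v h = M *v h + (\<tau> \<bullet> h) *\<^sub>R (M *v \<sigma>)
        + (\<sigma> \<bullet> (M *v h) + (\<tau> \<bullet> h) * (\<sigma> \<bullet> (M *v \<sigma>))) *\<^sub>R \<tau>
        + (1 - k) *\<^sub>R ((\<tau> \<bullet> h) *\<^sub>R d + (d \<bullet> h) *\<^sub>R \<tau>) + (k * (1 - k) * \<psi> \<sigma> * (\<tau> \<bullet> h)) *\<^sub>R \<tau>" for h
    using C2L_mv[OF CL \<sigma>S] L\<sigma> by (simp add: M_def d_def)
  have fod: "\<sigma> \<bullet> d = k * \<psi> \<sigma>" using fo' by (simp add: d_def)
  have quad: "v \<bullet> (Pt *v v) = v \<bullet> (M *v v) - ((\<sigma> \<bullet> (M *v \<sigma>) - k * (k - 1) * \<psi> \<sigma>) * (\<sigma> \<bullet> v)^2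
        + 2 * (\<sigma> \<bullet> v) * (\<sigma> \<bullet> (M *v v) - (\<sigma> \<bullet> v) * (\<sigma> \<bullet> (M *v \<sigma>)) + (1 - k) * (d \<bullet> v - (\<sigma> \<bullet> v) * (\<sigma> \<bullet> d)))
        - 2 * (\<tau> \<bullet> v) * (\<sigma> \<bullet> (M *v v) - (\<sigma> \<bullet> v) * (\<sigma> \<bullet> (M *v \<sigma>)) + (1 - k) * (d \<bullet> v - (\<sigma> \<bullet> v) * (\<sigma> \<bullet> d)))
        - (\<tau> \<bullet> v)^2 * (\<sigma> \<bullet> (M *v \<sigma>) - k * (k - 1) * \<psi> \<sigma>))" for v
    unfolding Pt_def d_def[symmetric]
    by (rule quad_alg[OF Msym ss t\<sigma> fod _ X]) (simp add: k_def)
  define Q where "Q = M + \<epsilon> *\<^sub>R proj_along \<sigma> - Pt"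
  have Qsym: "Q \<in> Sym2"
  proof -
    have "x \<bullet> (Q *v y) = y \<bullet> (Q *v x)" for x y
    proof -
      have "x \<bullet> (Pt *v y) = y \<bullet> (Pt *v x)" using Ptsym by (simp add: Sym2_iff)
      moreover have "x \<bullet> (M *v y) = y \<bullet> (M *v x)" by (rule Msym)
      ultimately show ?thesis
        by (simp add: Q_def inner_diff_right inner_add_right inner_commute)
    qed
    then show ?thesis by (simp add: Sym2_iff)
  qed
  have Qpos: "0 \<le> v \<bullet> (Q *v v)" for v
  proof -
    define \<mu> where "\<mu> = \<sigma> \<bullet> (M *v v) - (\<sigma> \<bullet> v) * (\<sigma> \<bullet> (M *v \<sigma>)) + (1 - k) * (d \<bullet> v - (\<sigma> \<bullet> v) * (\<sigma> \<bullet> d))"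
    have mv: "m \<bullet> v = \<mu>"
      using Msym[of v \<sigma>]
      by (simp add: m_def \<mu>_def inner_diff_left inner_add_left inner_commute algebra_simps)
    have tv: "\<tau> \<bullet> v = - \<mu> / (a + \<epsilon>)" by (simp add: \<tau>_def mv c_def)
    have "v \<bullet> (Q *v v) = \<epsilon> * (\<sigma> \<bullet> v)^2 + (a * (\<sigma> \<bullet> v)^2 + 2 * (\<sigma> \<bullet> v) * \<mu> - 2 * (\<tau> \<bullet> v) * \<mu> - (\<tau> \<bullet> v)^2 * a)"
      unfolding Q_def mv_diff mv_add inner_diff_right inner_add_right quad
      by (simp add: a_def \<mu>_def power2_eq_square inner_commute)
    then show ?thesis unfolding tv using quad_nonneg[OF a eps] by simp
  qed
  have "psd Q" using Qsym Qpos by (simp add: psd_def)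
  then have "Pt + Q \<in> G" by (rule Gpos[OF PtG])
  then show ?thesis by (simp add: Q_def M_def)
qed

lemma dir2_sphere:
  fixes g u :: "real^'n \<Rightarrow> ereal" and \<sigma> :: "real^'n"
  assumes rel: "\<And>x. x \<noteq> 0 \<Longrightarrow> u x = ereal (1 / norm x powr (p - 2)) * g ((1 / norm x) *\<^sub>R x)"
    and GS: "G \<subseteq> Sym2" and Gpos: "\<And>A P. A \<in> G \<Longrightarrow> psd P \<Longrightarrow> A + P \<in> G" and Gc: "closed G"
    and Gsub: "sphere_subharmonic (F_sphere p G) g"
    and n: "norm \<sigma> = 1" and C2: "C2_near \<psi> D\<psi> H\<psi> \<sigma>"
    and test: "\<exists>e>0. \<forall>y\<in>- {0}. dist y \<sigma> < e \<longrightarrow> u y \<le> ereal (\<psi> y)"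
    and eq: "u \<sigma> = ereal (\<psi> \<sigma>)"
  shows "H\<psi> \<sigma> \<in> G"
proof -
  obtain e0 where e0: "e0 > 0" and C: "C2L (ball \<sigma> e0) \<psi> D\<psi> (\<lambda>y h. H\<psi> y *v h)"
    using C2_near_C2L[OF C2] by blast
  obtain e1 where e1: "e1 > 0" and T1': "\<forall>y\<in>- {0}. dist y \<sigma> < e1 \<longrightarrow> u y \<le> ereal (\<psi> y)"
    using test by blast
  have T1: "\<And>y. y \<noteq> 0 \<Longrightarrow> dist y \<sigma> < e1 \<Longrightarrow> u y \<le> ereal (\<psi> y)" using T1' by blast
  have g\<sigma>: "g \<sigma> = ereal (\<psi> \<sigma>)" using rel_sphere[OF rel n] eq by simp
  have mn: "\<psi> \<sigma> \<le> (1 + t) powr (- (2 - p)) * \<psi> ((1 + t) *\<^sub>R \<sigma>)" if t: "\<bar>t\<bar> < min e1 1" for t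
  proof -
    define b where "b = 1 + t"
    have bp: "b > 0" using t by (auto simp: b_def)
    have nz: "b *\<^sub>R \<sigma> \<noteq> 0" using bp n by auto
    have "dist (b *\<^sub>R \<sigma>) \<sigma> = \<bar>t\<bar>"
    proof -
      have "b *\<^sub>R \<sigma> - \<sigma> = t *\<^sub>R \<sigma>" by (simp add: b_def algebra_simps)
      then show ?thesis using n by (simp add: dist_norm)
    qed
    then have "u (b *\<^sub>R \<sigma>) \<le> ereal (\<psi> (b *\<^sub>R \<sigma>))" using T1[OF nz] t by simp
    moreover have "u (b *\<^sub>R \<sigma>) = ereal (b powr (2 - p)) * g \<sigma>" by (rule hom_rel[OF rel bp n])
    ultimately have le: "b powr (2 - p) * \<psi> \<sigma> \<le> \<psi> (b *\<^sub>R \<sigma>)" using g\<sigma> by simp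
    have "\<psi> \<sigma> = b powr (- (2 - p)) * (b powr (2 - p) * \<psi> \<sigma>)"
      using bp by (simp add: powr_add[symmetric] mult.assoc[symmetric])
    also have "\<dots> \<le> b powr (- (2 - p)) * \<psi> (b *\<^sub>R \<sigma>)" using le by (intro mult_left_mono) auto
    finally show ?thesis by (simp add: b_def)
  qed
  have rad: "\<sigma> \<bullet> D\<psi> \<sigma> = (2 - p) * \<psi> \<sigma> \<and> (2 - p) * ((2 - p) - 1) * \<psi> \<sigma> \<le> \<sigma> \<bullet> (H\<psi> \<sigma> *v \<sigma>)"
    by (rule radial[OF C e0 n, of "min e1 1"]) (use e1 mn in auto)
  have epsG: "H\<psi> \<sigma> + inverse (real (Suc j)) *\<^sub>R proj_along \<sigma> \<in> G" for j
    by (rule dir2_eps[OF rel GS Gpos Gsub n C e0 e1 T1 g\<sigma>]) (use rad in auto)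
  have lim: "(\<lambda>j. H\<psi> \<sigma> + inverse (real (Suc j)) *\<^sub>R proj_along \<sigma>) \<longlonglongrightarrow> H\<psi> \<sigma> + 0 *\<^sub>R proj_along \<sigma>"
    by (intro tendsto_intros LIMSEQ_inverse_real_of_nat)
  show ?thesis using closed_sequentially[OF Gc epsG lim] by simp
qed

lemma scale_hess:
  assumes C: "C2L T \<psi> D\<psi> (\<lambda>y h. H\<psi> y *v h)" and ST: "\<And>y. y \<in> S \<Longrightarrow> \<rho> *\<^sub>R y \<in> T"
  shows "\<exists>D L. C2L S (\<lambda>y. c * \<psi> (\<rho> *\<^sub>R y)) D L \<and> (\<forall>y\<in>S. \<forall>h. L y h = (c * \<rho> * \<rho>) *\<^sub>R (H\<psi> (\<rho> *\<^sub>R y) *v h))"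
proof -
  note Cc = C2L_mult[OF C2L_const[of S c] C2L_comp_scale[OF C C2L_const[of S \<rho>] ST]]
  show ?thesis
    apply (intro exI conjI ballI allI)
     apply (rule Cc) apply blast
    apply simp
    done
qed

lemma dist_scale: "dist (\<rho> *\<^sub>R y) (\<rho> *\<^sub>R z) = \<bar>\<rho>\<bar> * dist y (z::'a::real_normed_vector)"
proof -
  have "\<rho> *\<^sub>R y - \<rho> *\<^sub>R z = \<rho> *\<^sub>R (y - z)" by (simp add: algebra_simps)
  then show ?thesis by (simp add: dist_norm)
qed

lemma dir2:
  fixes g u :: "real^'n \<Rightarrow> ereal"
  assumes rel: "\<And>x. x \<noteq> 0 \<Longrightarrow> u x = ereal (1 / norm x powr (p - 2)) * g ((1 / norm x) *\<^sub>R x)"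
    and GS: "G \<subseteq> Sym2" and Gpos: "\<And>A P. A \<in> G \<Longrightarrow> psd P \<Longrightarrow> A + P \<in> G" and Gc: "closed G"
    and Gcone: "\<And>A t. A \<in> G \<Longrightarrow> t > 0 \<Longrightarrow> t *\<^sub>R A \<in> G"
    and Gsub: "sphere_subharmonic (F_sphere p G) g" and U: "usc_on (- {0}) u"
  shows "F_subharmonic G (- {0}) u"
  unfolding F_subharmonic_def
proof (intro conjI U ballI allI impI)
  fix x0 :: "real^'n" and \<psi> D\<psi> H\<psi>
  assume x0: "x0 \<in> - {0}" and C2: "C2_near \<psi> D\<psi> H\<psi> x0"
    and test: "\<exists>e>0. \<forall>y\<in>- {0}. dist y x0 < e \<longrightarrow> u y \<le> ereal (\<psi> y)"
    and eq: "u x0 = ereal (\<psi> x0)"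
  define \<rho> where "\<rho> = norm x0"
  have \<rho>: "\<rho> > 0" using x0 by (simp add: \<rho>_def)
  define \<sigma> where "\<sigma> = (1 / \<rho>) *\<^sub>R x0"
  have n: "norm \<sigma> = 1" using \<rho> by (simp add: \<sigma>_def \<rho>_def)
  have x\<sigma>: "\<rho> *\<^sub>R \<sigma> = x0" using \<rho> by (simp add: \<sigma>_def)
  obtain e0 where e0: "e0 > 0" and C: "C2L (ball x0 e0) \<psi> D\<psi> (\<lambda>y h. H\<psi> y *v h)"
    using C2_near_C2L[OF C2] by blast
  define S where "S = ball \<sigma> (e0 / \<rho>)"
  have ST: "\<rho> *\<^sub>R y \<in> ball x0 e0" if "y \<in> S" for y
  proof -
    have "dist (\<rho> *\<^sub>R y) x0 = \<rho> * dist y \<sigma>" using dist_scale[of \<rho> y \<sigma>] \<rho> x\<sigma> by simp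
    also have "\<dots> < e0" using that \<rho> by (simp add: S_def dist_commute field_simps)
    finally show ?thesis by (simp add: dist_commute)
  qed
  have \<sigma>S: "\<sigma> \<in> S" using e0 \<rho> by (simp add: S_def)
  define c where "c = \<rho> powr (p - 2)"
  have cp: "c > 0" using \<rho> by (simp add: c_def)
  obtain D L where CL: "C2L S (\<lambda>y. c * \<psi> (\<rho> *\<^sub>R y)) D L"
    and LL: "\<And>h. L \<sigma> h = (c * \<rho> * \<rho>) *\<^sub>R (H\<psi> x0 *v h)"
    using scale_hess[OF C ST, of S c] \<sigma>S x\<sigma> by force
  have C2n: "C2_near (\<lambda>y. c * \<psi> (\<rho> *\<^sub>R y)) D (\<lambda>y. matrix (L y)) \<sigma>"
    by (rule C2L_C2_near[OF CL _ \<sigma>S]) (simp add: S_def)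
  have cinv: "c = 1 / \<rho> powr (2 - p)" using powr_minus_divide[of \<rho> "2 - p"] by (simp add: c_def)
  obtain e1 where e1: "e1 > 0" and T1: "\<forall>y\<in>- {0}. dist y x0 < e1 \<longrightarrow> u y \<le> ereal (\<psi> y)"
    using test by blast
  have test': "\<exists>e>0. \<forall>y\<in>- {0}. dist y \<sigma> < e \<longrightarrow> u y \<le> ereal (c * \<psi> (\<rho> *\<^sub>R y))"
  proof (intro exI[of _ "e1 / \<rho>"] conjI ballI impI)
    show "e1 / \<rho> > 0" using e1 \<rho> by simp
    fix y assume y: "y \<in> - {0}" "dist y \<sigma> < e1 / \<rho>"
    have y0: "y \<noteq> 0" using y by simp
    have "dist (\<rho> *\<^sub>R y) x0 = \<rho> * dist y \<sigma>" using dist_scale[of \<rho> y \<sigma>] \<rho> x\<sigma> by simp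
    also have "\<dots> < e1" using y \<rho> by (simp add: field_simps)
    finally have "u (\<rho> *\<^sub>R y) \<le> ereal (\<psi> (\<rho> *\<^sub>R y))" using T1 y0 \<rho> by auto
    then have "ereal (\<rho> powr (2 - p)) * u y \<le> ereal (\<psi> (\<rho> *\<^sub>R y))" using hom_scale[OF rel \<rho> y0] by simp
    then have "u y \<le> ereal (\<psi> (\<rho> *\<^sub>R y) / \<rho> powr (2 - p))"
      using ereal_mult_le_iff[of "\<rho> powr (2 - p)"] \<rho> by simp
    then show "u y \<le> ereal (c * \<psi> (\<rho> *\<^sub>R y))" by (simp add: cinv)
  qed
  have \<sigma>0: "\<sigma> \<noteq> 0" using n by auto
  have "ereal (\<rho> powr (2 - p)) * u \<sigma> = ereal (\<psi> x0)" using hom_scale[OF rel \<rho> \<sigma>0] x\<sigma> eq by simp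
  then have eq': "u \<sigma> = ereal (c * \<psi> (\<rho> *\<^sub>R \<sigma>))"
    using ereal_mult_eq_iff[of "\<rho> powr (2 - p)"] \<rho> x\<sigma> by (simp add: cinv)
  have HG: "matrix (L \<sigma>) \<in> G"
    by (rule dir2_sphere[OF rel GS Gpos Gc Gsub n C2n test' eq'])
  have "matrix (L \<sigma>) = (c * \<rho> * \<rho>) *\<^sub>R H\<psi> x0"
    unfolding matrix_eq using C2L_mv[OF CL \<sigma>S] LL by simp
  then have "(c * \<rho> * \<rho>) *\<^sub>R H\<psi> x0 \<in> G" using HG by simp
  then have "(1 / (c * \<rho> * \<rho>)) *\<^sub>R ((c * \<rho> * \<rho>) *\<^sub>R H\<psi> x0) \<in> G"
    by (rule Gcone) (use \<open>(c * \<rho> * \<rho>) *\<^sub>R H\<psi> x0 \<in> G\<close> cp \<rho> in auto)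
  moreover have "(1 / (c * \<rho> * \<rho>)) *\<^sub>R ((c * \<rho> * \<rho>) *\<^sub>R H\<psi> x0) = H\<psi> x0"
    using cp \<rho> by simp
  ultimately show "H\<psi> x0 \<in> G" by metis
qed

lemma Sym2_add: "A \<in> Sym2 \<Longrightarrow> B \<in> Sym2 \<Longrightarrow> A + B \<in> Sym2"
  by (simp add: Sym2_iff inner_add_right)
lemma Sym2_diff: "A \<in> Sym2 \<Longrightarrow> B \<in> Sym2 \<Longrightarrow> A - B \<in> Sym2"
  by (simp add: Sym2_iff inner_diff_right)
lemma Sym2_scale: "A \<in> Sym2 \<Longrightarrow> c *\<^sub>R A \<in> Sym2"
  by (simp add: Sym2_iff)
lemma Sym2_neg: "A \<in> Sym2 \<Longrightarrow> - A \<in> Sym2"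
  using Sym2_scale[of A "-1"] by simp

lemma closed_Sym2: "closed (Sym2 :: (real^'n^'n) set)"
proof -
  have "continuous_on UNIV (\<lambda>A::real^'n^'n. transpose A)"
    unfolding transpose_def by (intro continuous_on_vec_lambda continuous_on_vec_nth_comp continuous_on_id)
  then have "closed {A::real^'n^'n. transpose A = A}"
    by (intro closed_Collect_eq continuous_on_id)
  then show ?thesis by (simp add: Sym2_def)
qed

lemma closed_dual:
  fixes F :: "(real^'n^'n) set"
  shows "closed (dual_subeq F)"
proof -
  have "open (- dual_subeq F)"
    unfolding open_dist
  proof (intro ballI)
    fix A assume A: "A \<in> - dual_subeq F"
    show "\<exists>e>0. \<forall>y. dist y A < e \<longrightarrow> y \<in> - dual_subeq F"
    proof (cases "A \<in> Sym2")
      case False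
      have "open (- (Sym2 :: (real^'n^'n) set))" using closed_Sym2 by (simp add: closed_def)
      then obtain e where "e > 0" "\<forall>y. dist y A < e \<longrightarrow> y \<in> - Sym2"
        using False unfolding open_dist by blast
      then show ?thesis by (auto simp: dual_subeq_def)
    next
      case True
      then have "A \<in> uminus ` sym_interior F" using A by (simp add: dual_subeq_def)
      then obtain B where B: "A = - B" "B \<in> sym_interior F" by blast
      then obtain e where e: "e > 0" "\<forall>C\<in>Sym2. dist C B < e \<longrightarrow> C \<in> F"
        by (auto simp: sym_interior_def)
      show ?thesis
      proof (intro exI[of _ e] conjI allI impI e(1))
        fix y assume y: "dist y A < e"
        show "y \<in> - dual_subeq F"
        proof (cases "y \<in> Sym2")
          case False then show ?thesis by (simp add: dual_subeq_def)
        next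
          case True
          have "- y \<in> sym_interior F" unfolding sym_interior_def
          proof (intro CollectI conjI exI[of _ "e - dist y A"])
            show "- y \<in> Sym2" using True by (rule Sym2_neg)
            show "e - dist y A > 0" using y by simp
            show "\<forall>C\<in>Sym2. dist C (- y) < e - dist y A \<longrightarrow> C \<in> F"
            proof (intro ballI impI)
              fix C assume C: "C \<in> Sym2" "dist C (- y) < e - dist y A"
              have "dist (- y) B = dist y A" using B by (simp add: dist_norm norm_minus_commute add.commute)
              then have "dist C B < e" using C dist_triangle[of C B "- y"] by simp
              then show "C \<in> F" using e C by blast
            qed
          qed
          then have "y \<in> uminus ` sym_interior F" by (metis image_eqI minus_minus)
          then show ?thesis by (simp add: dual_subeq_def)
        qed
      qed
    qed
  qed
  then show ?thesis by (simp add: closed_def)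
qed

lemma dual_pos:
  assumes cs: "cone_subequation F" and A: "A \<in> dual_subeq F" and P: "psd P"
  shows "A + P \<in> dual_subeq F"
proof -
  have AS: "A \<in> Sym2" using A by (simp add: dual_subeq_def)
  have PS: "P \<in> Sym2" using P by (simp add: psd_def)
  have pos: "\<And>X Q. X \<in> F \<Longrightarrow> psd Q \<Longrightarrow> X + Q \<in> F" using cs by (simp add: cone_subequation_def)
  have "A + P \<notin> uminus ` sym_interior F"
  proof
    assume "A + P \<in> uminus ` sym_interior F"
    then obtain B where B: "A + P = - B" "B \<in> sym_interior F" by blast
    then obtain e where e: "e > 0" "B \<in> Sym2" "\<forall>C\<in>Sym2. dist C B < e \<longrightarrow> C \<in> F"
      by (auto simp: sym_interior_def)
    have "- A \<in> sym_interior F" unfolding sym_interior_def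
    proof (intro CollectI conjI exI[of _ e] e(1) ballI impI)
      show "- A \<in> Sym2" using AS by (rule Sym2_neg)
      fix C assume C: "C \<in> Sym2" "dist C (- A) < e"
      have "- A = - (A + P) + P" by simp
      then have mA: "- A = B + P" using B(1) by simp
      have "dist (C - P) B = dist C (- A)" unfolding mA by (simp add: dist_norm algebra_simps)
      then have "C - P \<in> F" using e(3) C Sym2_diff[OF C(1) PS] by auto
      then have "(C - P) + P \<in> F" using pos P by blast
      then show "C \<in> F" by simp
    qed
    then have "A \<in> uminus ` sym_interior F" by (metis image_eqI minus_minus)
    then show False using A by (simp add: dual_subeq_def)
  qed
  then show ?thesis using Sym2_add[OF AS PS] by (simp add: dual_subeq_def)
qed

lemma dual_cone:
  assumes cs: "cone_subequation F" and A: "A \<in> dual_subeq F" and t: "t > 0"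
  shows "t *\<^sub>R A \<in> dual_subeq F"
proof -
  have AS: "A \<in> Sym2" using A by (simp add: dual_subeq_def)
  have cone: "\<And>X s. X \<in> F \<Longrightarrow> s \<ge> 0 \<Longrightarrow> s *\<^sub>R X \<in> F" using cs by (simp add: cone_subequation_def)
  have "t *\<^sub>R A \<notin> uminus ` sym_interior F"
  proof
    assume "t *\<^sub>R A \<in> uminus ` sym_interior F"
    then obtain B where B: "t *\<^sub>R A = - B" "B \<in> sym_interior F" by blast
    then obtain e where e: "e > 0" "B \<in> Sym2" "\<forall>C\<in>Sym2. dist C B < e \<longrightarrow> C \<in> F"
      by (auto simp: sym_interior_def)
    have "B = - (t *\<^sub>R A)" using B(1) by simp
    then have mA: "- A = (1 / t) *\<^sub>R B" using t by simp
    have "- A \<in> sym_interior F" unfolding sym_interior_def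
    proof (intro CollectI conjI exI[of _ "e / t"] ballI impI)
      show "- A \<in> Sym2" using AS by (rule Sym2_neg)
      show "e / t > 0" using e t by simp
      fix C assume C: "C \<in> Sym2" "dist C (- A) < e / t"
      have "dist (t *\<^sub>R C) B = t * dist C (- A)"
        using dist_scale[of t C "- A"] t mA by simp
      also have "\<dots> < e" using C t by (simp add: field_simps)
      finally have "t *\<^sub>R C \<in> F" using e(3) Sym2_scale[OF C(1)] by blast
      then have "(1 / t) *\<^sub>R (t *\<^sub>R C) \<in> F" by (rule cone) (use t in simp)
      moreover have "(1 / t) *\<^sub>R (t *\<^sub>R C) = C" using t by simp
      ultimately show "C \<in> F" by metis
    qed
    then have "A \<in> uminus ` sym_interior F" by (metis image_eqI minus_minus)
    then show False using A by (simp add: dual_subeq_def)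
  qed
  then show ?thesis using Sym2_scale[OF AS] by (simp add: dual_subeq_def)
qed

lemma subh_equiv:
  fixes g u :: "real^'n \<Rightarrow> ereal" and G :: "(real^'n^'n) set"
  assumes rel: "\<And>x. x \<noteq> 0 \<Longrightarrow> u x = ereal (1 / norm x powr (p - 2)) * g ((1 / norm x) *\<^sub>R x)"
    and GS: "G \<subseteq> Sym2" and Gpos: "\<And>A P. A \<in> G \<Longrightarrow> psd P \<Longrightarrow> A + P \<in> G" and Gc: "closed G"
    and Gcone: "\<And>A t. A \<in> G \<Longrightarrow> t > 0 \<Longrightarrow> t *\<^sub>R A \<in> G"
  shows "F_subharmonic G (- {0}) u \<longleftrightarrow> sphere_subharmonic (F_sphere p G) g"
proof
  assume U: "F_subharmonic G (- {0}) u"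
  have "usc_on (- {0}) u" using U by (simp add: F_subharmonic_def)
  then have "usc_on (sphere 0 1) g" using usc_transfer[OF rel] by simp
  then show "sphere_subharmonic (F_sphere p G) g" using dir1[OF rel GS U] by simp
next
  assume S: "sphere_subharmonic (F_sphere p G) g"
  have "usc_on (sphere 0 1) g" using S by (simp add: sphere_subharmonic_def)
  then have "usc_on (- {0}) u" using usc_transfer[OF rel] by simp
  then show "F_subharmonic G (- {0}) u" using dir2[OF rel GS Gpos Gc Gcone S] by simp
qed

theorem theorem5p5:
  fixes p :: real and F :: "(real^'n^'n) set"
    and g :: "real^'n \<Rightarrow> ereal" and u :: "real^'n \<Rightarrow> ereal"
  assumes "p \<noteq> 2"
    and "cone_subequation F"
    and "usc_on (sphere 0 1) g"
    and "usc_on (- {0}) u"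
    and "\<And>x. x \<noteq> 0 \<Longrightarrow> u x = ereal (1 / norm x powr (p - 2)) * g ((1 / norm x) *\<^sub>R x)"
  shows "(F_subharmonic F (- {0}) u \<longleftrightarrow> sphere_subharmonic (F_sphere p F) g)
       \<and> (F_harmonic F (- {0}) u \<longleftrightarrow>
            sphere_subharmonic (F_sphere p F) g \<and>
            sphere_subharmonic (F_sphere p (dual_subeq F)) (\<lambda>x. - g x))"
proof -
  note rel = assms(5)
  have cs: "cone_subequation F" by fact
  have FS: "F \<subseteq> Sym2" and Fc: "closed F" and Fpos: "\<And>A P. A \<in> F \<Longrightarrow> psd P \<Longrightarrow> A + P \<in> F"
    and Fcone: "\<And>A t. A \<in> F \<Longrightarrow> t > 0 \<Longrightarrow> t *\<^sub>R A \<in> F"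
    using cs by (auto simp: cone_subequation_def)
  have E1: "F_subharmonic F (- {0}) u \<longleftrightarrow> sphere_subharmonic (F_sphere p F) g"
    by (rule subh_equiv[OF rel FS Fpos Fc Fcone])
  have rel': "- u x = ereal (1 / norm x powr (p - 2)) * (- g ((1 / norm x) *\<^sub>R x))" if "x \<noteq> 0" for x
    using rel[OF that] by simp
  have DS: "dual_subeq F \<subseteq> Sym2" by (auto simp: dual_subeq_def)
  have E2: "F_subharmonic (dual_subeq F) (- {0}) (\<lambda>x. - u x) \<longleftrightarrow>
      sphere_subharmonic (F_sphere p (dual_subeq F)) (\<lambda>x. - g x)"
    by (rule subh_equiv[OF rel' DS dual_pos[OF cs] closed_dual dual_cone[OF cs]])
  show ?thesis using E1 E2 by (simp add: F_harmonic_def)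
qed

end
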